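(* Let $\varphi:\mathbb{R}\to\mathbb{R}$ be smooth and let $\Sigma$ be a $\varphi$-stochastically complete $[\varphi,\vec e_3]$-minimal surface in $\mathbb{R}^3$ contained in the half-space $\mathcal{H}_{\vec v}=\{x\in\mathbb{R}^3:\langle x,\vec v\rangle\le 0\}$ for some nonzero vector $\vec v$ with $\langle\vec v,\vec e_3\rangle=0$. Then one of the following holds: (1) $\Sigma$ is a plane parallel to $\partial\mathcal{H}_{\vec v}$; (2) $\Sigma$ is not such a plane, and there exists a divergent sequence $\{p_n\}\subset\Sigma$ with $\eta(p_n)\to 0$ as $n\to\infty$.
   Context: Surfaces are connected, orientable, immersed in $\mathbb{R}^3$, without boundary, with unit normal $N$; $\{\vec e_1,\vec e_2,\vec e_3\}$ is the standard basis. For a surface $\Sigma$, $\mu(p)=\langle p,\vec e_3\rangle$ is the height function and $\eta=\langle N,\vec e_3\rangle$ the angle function. Given a smooth $\varphi$, $\Sigma$ is called $[\varphi,\vec e_3]$-minimal if its mean curvature vector $\vec H$ (trace of the second fundamental form) satisfies $\vec H=\dot\varphi(\mu)\,\eta\,N$; equivalently $H=-\dot\varphi(\mu)\eta$ with $\vec H=-HN$. On $\Sigma$ write $\varphi$ for $\varphi\circ\mu$ and let $\Delta^{\varphi}u=\Delta u+\langle\nabla\varphi,\nabla u\rangle$ (induced metric). $\Sigma$ is $\varphi$-stochastically complete if for every $u\in C^2(\Sigma)$ with $u^*=\sup_\Sigma u<+\infty$ there is a sequence $p_n\in\Sigma$ with $u(p_n)>u^*-1/n$ and $\Delta^{\varphi}u(p_n)<1/n$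 for all $n$. A sequence is divergent if it eventually leaves every compact subset of $\Sigma$. *)

theory Defs
  imports "HOL-Analysis.Analysis"
begin

definition pd1 :: "(real \<times> real \<Rightarrow> 'b::real_normed_vector) \<Rightarrow> real \<times> real \<Rightarrow> 'b" where
  "pd1 f p = vector_derivative (\<lambda>t. f (fst p + t, snd p)) (at 0)"

definition pd2 :: "(real \<times> real \<Rightarrow> 'b::real_normed_vector) \<Rightarrow> real \<times> real \<Rightarrow> 'b" where
  "pd2 f p = vector_derivative (\<lambda>t. f (fst p, snd p + t)) (at 0)"

fun Ck_on :: "nat \<Rightarrow> (real \<times> real) set \<Rightarrow> (real \<times> real \<Rightarrow> 'b::real_normed_vector) \<Rightarrow> bool" where
  "Ck_on 0 S f = continuous_on S f"
| "Ck_on (Suc k) S f =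
     (continuous_on S f \<and>
      (\<forall>p\<in>S. (\<lambda>t. f (fst p + t, snd p)) differentiable (at 0)
            \<and> (\<lambda>t. f (fst p, snd p + t)) differentiable (at 0))
      \<and> Ck_on k S (pd1 f) \<and> Ck_on k S (pd2 f))"

definition smooth2_on :: "(real \<times> real) set \<Rightarrow> (real \<times> real \<Rightarrow> 'b::real_normed_vector) \<Rightarrow> bool" where
  "smooth2_on S f \<longleftrightarrow> (\<forall>k. Ck_on k S f)"

definition smooth_real :: "(real \<Rightarrow> real) \<Rightarrow> bool" where
  "smooth_real \<phi> \<longleftrightarrow> (\<forall>k x. ((deriv ^^ k) \<phi>) differentiable (at x))"

text \<open>The surface is the type 'm (with its topology); a smooth atlas is given by local
  parametrisations (V, x): V open in R^2, x a homeomorphism of V onto an open subset of 'm;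
  the parametrised sets cover 'm and transition maps are C^\<infinity>. No boundary: charts are open.\<close>

definition surface_atlas :: "((real \<times> real) set \<times> (real \<times> real \<Rightarrow> 'm::topological_space)) set \<Rightarrow> bool" where
  "surface_atlas A \<longleftrightarrow>
     (\<forall>(V, x)\<in>A. open V \<and> open (x ` V) \<and> continuous_on V x \<and> inj_on x V
                  \<and> continuous_on (x ` V) (inv_into V x))
   \<and> (\<Union>(V, x)\<in>A. x ` V) = UNIV
   \<and> (\<forall>(V, x)\<in>A. \<forall>(W, y)\<in>A.
        smooth2_on (V \<inter> x -` (y ` W)) (\<lambda>q. inv_into W y (x q)))"

definition immersion :: "((real \<times> real) set \<times> (real \<times> real \<Rightarrow> 'm)) set \<Rightarrow> ('m \<Rightarrow> real^3) \<Rightarrow> bool" where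
  "immersion A F \<longleftrightarrow>
     (\<forall>(V, x)\<in>A. smooth2_on V (F \<circ> x)
        \<and> (\<forall>q\<in>V. inj (\<lambda>(s, t). s *\<^sub>R pd1 (F \<circ> x) q + t *\<^sub>R pd2 (F \<circ> x) q)))"

text \<open>A (global, continuous) unit normal field along the immersion; its existence is orientability.\<close>
definition unit_normal :: "((real \<times> real) set \<times> (real \<times> real \<Rightarrow> 'm::topological_space)) set \<Rightarrow> ('m \<Rightarrow> real^3) \<Rightarrow> ('m \<Rightarrow> real^3) \<Rightarrow> bool" where
  "unit_normal A F N \<longleftrightarrow> continuous_on UNIV N \<and> (\<forall>p. norm (N p) = 1)
     \<and> (\<forall>(V, x)\<in>A. \<forall>q\<in>V. N (x q) \<bullet> pd1 (F \<circ> x) q = 0 \<and> N (x q) \<bullet> pd2 (F \<circ> x) q = 0)"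

definition e3 :: "real^3" where "e3 = axis 3 1"

definition metric_det :: "(real \<times> real \<Rightarrow> real^3) \<Rightarrow> real \<times> real \<Rightarrow> real" where
  "metric_det X q = (pd1 X q \<bullet> pd1 X q) * (pd2 X q \<bullet> pd2 X q) - (pd1 X q \<bullet> pd2 X q)^2"

text \<open>Mean curvature vector = trace of the (vector-valued) second fundamental form:
  (g^{ij} <X_ij, n>) n.\<close>
definition mean_curv_vec :: "(real \<times> real \<Rightarrow> real^3) \<Rightarrow> real^3 \<Rightarrow> real \<times> real \<Rightarrow> real^3" where
  "mean_curv_vec X n q =
    (let E = pd1 X q \<bullet> pd1 X q; Fm = pd1 X q \<bullet> pd2 X q; G = pd2 X q \<bullet> pd2 X q;
         L = pd1 (pd1 X) q \<bullet> n; M = pd2 (pd1 X) q \<bullet> n; Nn = pd2 (pd2 X) q \<bullet> n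
     in ((G * L - 2 * Fm * M + E * Nn) / (E * G - Fm^2)) *\<^sub>R n)"

text \<open>Tangential gradient (as a vector of R^3) of a local function f: g^{kl} f_k X_l.\<close>
definition tgrad :: "(real \<times> real \<Rightarrow> real^3) \<Rightarrow> (real \<times> real \<Rightarrow> real) \<Rightarrow> real \<times> real \<Rightarrow> real^3" where
  "tgrad X f q =
    (let E = pd1 X q \<bullet> pd1 X q; Fm = pd1 X q \<bullet> pd2 X q; G = pd2 X q \<bullet> pd2 X q;
         D = E * G - Fm^2
     in ((G * pd1 f q - Fm * pd2 f q) / D) *\<^sub>R pd1 X q
        + ((E * pd2 f q - Fm * pd1 f q) / D) *\<^sub>R pd2 X q)"

text \<open>Laplace--Beltrami operator: g^{ij} (f_ij - \<Gamma>^k_ij f_k), with \<Gamma>^k_ij f_k = <X_ij, grad f>.\<close>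
definition lap_local :: "(real \<times> real \<Rightarrow> real^3) \<Rightarrow> (real \<times> real \<Rightarrow> real) \<Rightarrow> real \<times> real \<Rightarrow> real" where
  "lap_local X f q =
    (let E = pd1 X q \<bullet> pd1 X q; Fm = pd1 X q \<bullet> pd2 X q; G = pd2 X q \<bullet> pd2 X q;
         D = E * G - Fm^2; gr = tgrad X f q
     in (G * (pd1 (pd1 f) q - pd1 (pd1 X) q \<bullet> gr)
         - 2 * Fm * (pd2 (pd1 f) q - pd2 (pd1 X) q \<bullet> gr)
         + E * (pd2 (pd2 f) q - pd2 (pd2 X) q \<bullet> gr)) / D)"

text \<open>\<Delta>^\<phi> u = \<Delta> u + <\<nabla>(\<phi>\<circ>\<mu>), \<nabla> u>, computed in the chart x at q.\<close>
definition lap_phi_local :: "(real \<Rightarrow> real) \<Rightarrow> ('m \<Rightarrow> real^3) \<Rightarrow> (real \<times> real \<Rightarrow> 'm) \<Rightarrow> ('m \<Rightarrow> real) \<Rightarrow> real \<times> real \<Rightarrow> real" where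
  "lap_phi_local \<phi> F x u q =
     lap_local (F \<circ> x) (u \<circ> x) q
     + tgrad (F \<circ> x) (\<lambda>r. \<phi> (F (x r) \<bullet> e3)) q \<bullet> tgrad (F \<circ> x) (u \<circ> x) q"

text \<open>[\<phi>, e3]-minimal: mean curvature vector = \<phi>'(\<mu>) \<eta> N.\<close>
definition phi_e3_minimal :: "((real \<times> real) set \<times> (real \<times> real \<Rightarrow> 'm)) set \<Rightarrow> ('m \<Rightarrow> real^3) \<Rightarrow> ('m \<Rightarrow> real^3) \<Rightarrow> (real \<Rightarrow> real) \<Rightarrow> bool" where
  "phi_e3_minimal A F N \<phi> \<longleftrightarrow>
     (\<forall>(V, x)\<in>A. \<forall>q\<in>V.
        mean_curv_vec (F \<circ> x) (N (x q)) q
          = (deriv \<phi> (F (x q) \<bullet> e3) * (N (x q) \<bullet> e3)) *\<^sub>R N (x q))"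

definition C2_surf :: "((real \<times> real) set \<times> (real \<times> real \<Rightarrow> 'm)) set \<Rightarrow> ('m \<Rightarrow> real) \<Rightarrow> bool" where
  "C2_surf A u \<longleftrightarrow> (\<forall>(V, x)\<in>A. Ck_on 2 V (u \<circ> x))"

definition phi_stoch_complete :: "((real \<times> real) set \<times> (real \<times> real \<Rightarrow> 'm)) set \<Rightarrow> ('m \<Rightarrow> real^3) \<Rightarrow> (real \<Rightarrow> real) \<Rightarrow> bool" where
  "phi_stoch_complete A F \<phi> \<longleftrightarrow>
     (\<forall>u. C2_surf A u \<and> bdd_above (range u) \<longrightarrow>
        (\<exists>p :: nat \<Rightarrow> 'm. \<forall>n. u (p n) > Sup (range u) - 1 / real (Suc n)
            \<and> (\<exists>(V, x)\<in>A. \<exists>q\<in>V. x q = p n \<and> lap_phi_local \<phi> F x u q < 1 / real (Suc n))))"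

definition divergent_seq :: "(nat \<Rightarrow> 'm::topological_space) \<Rightarrow> bool" where
  "divergent_seq p \<longleftrightarrow> (\<forall>K. compact K \<longrightarrow> (\<forall>\<^sub>F n in sequentially. p n \<notin> K))"

end

theory Submission
  imports Defs "HOL-Analysis.Cross3"
begin


lemma line1_shift:
  "((\<lambda>t. f (a + t, b)) has_vector_derivative d) (at 0) \<longleftrightarrow> ((\<lambda>s. f (s, b)) has_vector_derivative d) (at a)"
proof
  assume h: "((\<lambda>t. f (a + t, b)) has_vector_derivative d) (at 0)"
  have 1: "((\<lambda>s. s - a) has_vector_derivative 1) (at a)"
    by (auto intro!: derivative_eq_intros simp: has_real_derivative_iff_has_vector_derivative[symmetric])
  have "(((\<lambda>t. f (a + t, b)) \<circ> (\<lambda>s. s - a)) has_vector_derivative (1 *\<^sub>R d)) (at a)"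
    by (rule vector_diff_chain_at[OF 1]) (use h in simp)
  then show "((\<lambda>s. f (s, b)) has_vector_derivative d) (at a)" by (simp add: o_def)
next
  assume h: "((\<lambda>s. f (s, b)) has_vector_derivative d) (at a)"
  have 1: "((\<lambda>t. a + t) has_vector_derivative 1) (at 0)"
    by (auto intro!: derivative_eq_intros simp: has_real_derivative_iff_has_vector_derivative[symmetric])
  have "(((\<lambda>s. f (s, b)) \<circ> (\<lambda>t. a + t)) has_vector_derivative (1 *\<^sub>R d)) (at 0)"
    by (rule vector_diff_chain_at[OF 1]) (use h in simp)
  then show "((\<lambda>t. f (a + t, b)) has_vector_derivative d) (at 0)" by (simp add: o_def)
qed

lemma line2_shift:
  "((\<lambda>t. f (a, b + t)) has_vector_derivative d) (at 0) \<longleftrightarrow> ((\<lambda>s. f (a, s)) has_vector_derivative d) (at b)"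
proof
  assume h: "((\<lambda>t. f (a, b + t)) has_vector_derivative d) (at 0)"
  have 1: "((\<lambda>s. s - b) has_vector_derivative 1) (at b)"
    by (auto intro!: derivative_eq_intros simp: has_real_derivative_iff_has_vector_derivative[symmetric])
  have "(((\<lambda>t. f (a, b + t)) \<circ> (\<lambda>s. s - b)) has_vector_derivative (1 *\<^sub>R d)) (at b)"
    by (rule vector_diff_chain_at[OF 1]) (use h in simp)
  then show "((\<lambda>s. f (a, s)) has_vector_derivative d) (at b)" by (simp add: o_def)
next
  assume h: "((\<lambda>s. f (a, s)) has_vector_derivative d) (at b)"
  have 1: "((\<lambda>t. b + t) has_vector_derivative 1) (at 0)"
    by (auto intro!: derivative_eq_intros simp: has_real_derivative_iff_has_vector_derivative[symmetric])
  have "(((\<lambda>s. f (a, s)) \<circ> (\<lambda>t. b + t)) has_vector_derivative (1 *\<^sub>R d)) (at 0)"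
    by (rule vector_diff_chain_at[OF 1]) (use h in simp)
  then show "((\<lambda>t. f (a, b + t)) has_vector_derivative d) (at 0)" by (simp add: o_def)
qed

definition H1 :: "(real \<times> real \<Rightarrow> 'b::real_normed_vector) \<Rightarrow> real \<times> real \<Rightarrow> 'b \<Rightarrow> bool" where
  "H1 f p d \<longleftrightarrow> ((\<lambda>s. f (s, snd p)) has_vector_derivative d) (at (fst p))"
definition H2 :: "(real \<times> real \<Rightarrow> 'b::real_normed_vector) \<Rightarrow> real \<times> real \<Rightarrow> 'b \<Rightarrow> bool" where
  "H2 f p d \<longleftrightarrow> ((\<lambda>s. f (fst p, s)) has_vector_derivative d) (at (snd p))"

lemma H1_pd1: "H1 f p d \<Longrightarrow> pd1 f p = d"
  unfolding H1_def pd1_def line1_shift[symmetric] by (rule vector_derivative_at)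
lemma H2_pd2: "H2 f p d \<Longrightarrow> pd2 f p = d"
  unfolding H2_def pd2_def line2_shift[symmetric] by (rule vector_derivative_at)

lemma diff1_H1: "(\<lambda>t. f (fst p + t, snd p)) differentiable (at 0) \<Longrightarrow> H1 f p (pd1 f p)"
  unfolding H1_def pd1_def line1_shift[symmetric] by (rule vector_derivative_works[THEN iffD1])
lemma diff2_H2: "(\<lambda>t. f (fst p, snd p + t)) differentiable (at 0) \<Longrightarrow> H2 f p (pd2 f p)"
  unfolding H2_def pd2_def line2_shift[symmetric] by (rule vector_derivative_works[THEN iffD1])

lemma H1_diff1: "H1 f p d \<Longrightarrow> (\<lambda>t. f (fst p + t, snd p)) differentiable (at 0)"
  unfolding H1_def line1_shift[symmetric] by (rule differentiableI_vector)
lemma H2_diff2: "H2 f p d \<Longrightarrow> (\<lambda>t. f (fst p, snd p + t)) differentiable (at 0)"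
  unfolding H2_def line2_shift[symmetric] by (rule differentiableI_vector)

lemma Ck_H1: "Ck_on (Suc k) S f \<Longrightarrow> p \<in> S \<Longrightarrow> H1 f p (pd1 f p)"
  by (rule diff1_H1) simp
lemma Ck_H2: "Ck_on (Suc k) S f \<Longrightarrow> p \<in> S \<Longrightarrow> H2 f p (pd2 f p)"
  by (rule diff2_H2) simp

lemma Ck_cont: "Ck_on k S f \<Longrightarrow> continuous_on S f"
  by (cases k) auto

lemma Ck_mono: "Ck_on (Suc k) S f \<Longrightarrow> Ck_on k S f"
proof (induction k arbitrary: f)
  case 0 then show ?case by simp
next
  case (Suc k)
  from Suc.prems have "Ck_on (Suc k) S (pd1 f)" "Ck_on (Suc k) S (pd2 f)" by simp_all
  then have "Ck_on k S (pd1 f)" "Ck_on k S (pd2 f)" using Suc.IH by blast+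
  with Suc.prems show ?case by simp
qed

lemma Ck_mono_le: "Ck_on k S f \<Longrightarrow> j \<le> k \<Longrightarrow> Ck_on j S f"
proof (induction k)
  case 0 then show ?case by simp
next
  case (Suc k) then show ?case using Ck_mono le_Suc_eq by blast
qed

lemma open_line1: fixes S :: "(real \<times> real) set" assumes "open S" shows "open {s. (s, b) \<in> S}"
proof -
  have "continuous_on UNIV (\<lambda>s::real. (s, b))" by (intro continuous_intros)
  then show ?thesis using open_vimage[of S "\<lambda>s. (s, b)"] assms by (auto simp: vimage_def)
qed
lemma open_line2: fixes S :: "(real \<times> real) set" assumes "open S" shows "open {s. (a, s) \<in> S}"
proof -
  have "continuous_on UNIV (\<lambda>s::real. (a, s))" by (intro continuous_intros)
  then show ?thesis using open_vimage[of S "\<lambda>s. (a, s)"] assms by (auto simp: vimage_def)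
qed

lemma H1_cong: "open S \<Longrightarrow> p \<in> S \<Longrightarrow> (\<And>z. z \<in> S \<Longrightarrow> f z = g z) \<Longrightarrow> H1 f p d \<Longrightarrow> H1 g p d"
  unfolding H1_def
  apply (erule has_vector_derivative_transform_within_open[where S="{s. (s, snd p) \<in> S}"])
  by (auto simp: open_line1)
lemma H2_cong: "open S \<Longrightarrow> p \<in> S \<Longrightarrow> (\<And>z. z \<in> S \<Longrightarrow> f z = g z) \<Longrightarrow> H2 f p d \<Longrightarrow> H2 g p d"
  unfolding H2_def
  apply (erule has_vector_derivative_transform_within_open[where S="{s. (fst p, s) \<in> S}"])
  by (auto simp: open_line2)

lemma pd1_cong: "open S \<Longrightarrow> p \<in> S \<Longrightarrow> (\<And>z. z \<in> S \<Longrightarrow> f z = g z) \<Longrightarrow> pd1 f p = pd1 g p"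
proof -
  assume S: "open S" "p \<in> S" and e: "\<And>z. z \<in> S \<Longrightarrow> f z = g z"
  have e2: "\<And>z. z \<in> S \<Longrightarrow> g z = f z" using e by simp
  have "\<And>d. ((\<lambda>t. f (fst p + t, snd p)) has_vector_derivative d) (at 0) \<longleftrightarrow>
             ((\<lambda>t. g (fst p + t, snd p)) has_vector_derivative d) (at 0)"
  proof -
    fix d
    have "H1 f p d \<longleftrightarrow> H1 g p d" using H1_cong[OF S(1) S(2), of f g] H1_cong[OF S(1) S(2), of g f] e e2 by blast
    then show "?thesis d" unfolding H1_def line1_shift .
  qed
  then show ?thesis unfolding pd1_def vector_derivative_def by simp
qed
lemma pd2_cong: "open S \<Longrightarrow> p \<in> S \<Longrightarrow> (\<And>z. z \<in> S \<Longrightarrow> f z = g z) \<Longrightarrow> pd2 f p = pd2 g p"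
proof -
  assume S: "open S" "p \<in> S" and e: "\<And>z. z \<in> S \<Longrightarrow> f z = g z"
  have e2: "\<And>z. z \<in> S \<Longrightarrow> g z = f z" using e by simp
  have "\<And>d. ((\<lambda>t. f (fst p, snd p + t)) has_vector_derivative d) (at 0) \<longleftrightarrow>
             ((\<lambda>t. g (fst p, snd p + t)) has_vector_derivative d) (at 0)"
  proof -
    fix d
    have "H2 f p d \<longleftrightarrow> H2 g p d" using H2_cong[OF S(1) S(2), of f g] H2_cong[OF S(1) S(2), of g f] e e2 by blast
    then show "?thesis d" unfolding H2_def line2_shift .
  qed
  then show ?thesis unfolding pd2_def vector_derivative_def by simp
qed

lemma Ck_cong: "open S \<Longrightarrow> (\<And>z. z \<in> S \<Longrightarrow> f z = g z) \<Longrightarrow> Ck_on k S f \<Longrightarrow> Ck_on k S g"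
proof (induction k arbitrary: f g)
  case 0 then show ?case using continuous_on_cong by (metis Ck_on.simps(1))
next
  case (Suc k)
  have c: "continuous_on S g" using Suc.prems(2) Ck_cont[OF Suc.prems(3)] continuous_on_cong by metis
  have d: "\<forall>p\<in>S. (\<lambda>t. g (fst p + t, snd p)) differentiable (at 0) \<and> (\<lambda>t. g (fst p, snd p + t)) differentiable (at 0)"
  proof
    fix p assume p: "p \<in> S"
    have "H1 f p (pd1 f p)" "H2 f p (pd2 f p)" using Ck_H1[OF Suc.prems(3) p] Ck_H2[OF Suc.prems(3) p] by blast+
    then have "H1 g p (pd1 f p)" "H2 g p (pd2 f p)"
      using H1_cong[OF Suc.prems(1) p, of f g] H2_cong[OF Suc.prems(1) p, of f g] Suc.prems(2) by blast+
    then show "(\<lambda>t. g (fst p + t, snd p)) differentiable (at 0) \<and> (\<lambda>t. g (fst p, snd p + t)) differentiable (at 0)"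
      using H1_diff1 H2_diff2 by blast
  qed
  have "Ck_on k S (pd1 g)"
  proof (rule Suc.IH[of "pd1 f"])
    show "Ck_on k S (pd1 f)" using Suc.prems(3) by simp
    fix z assume z: "z \<in> S"
    show "pd1 f z = pd1 g z" by (rule pd1_cong[OF Suc.prems(1) z]) (rule Suc.prems(2))
  qed (rule Suc.prems(1))
  moreover have "Ck_on k S (pd2 g)"
  proof (rule Suc.IH[of "pd2 f"])
    show "Ck_on k S (pd2 f)" using Suc.prems(3) by simp
    fix z assume z: "z \<in> S"
    show "pd2 f z = pd2 g z" by (rule pd2_cong[OF Suc.prems(1) z]) (rule Suc.prems(2))
  qed (rule Suc.prems(1))
  ultimately show ?case using c d by simp
qed


lemma rd_iff: "((f::real\<Rightarrow>real) has_vector_derivative d) F \<longleftrightarrow> (f has_field_derivative d) F"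
  by (simp add: has_real_derivative_iff_has_vector_derivative)

lemma H1_add: "H1 f p d \<Longrightarrow> H1 g p e \<Longrightarrow> H1 (\<lambda>z. f z + g z) p (d + e)"
  unfolding H1_def by (rule has_vector_derivative_add)
lemma H2_add: "H2 f p d \<Longrightarrow> H2 g p e \<Longrightarrow> H2 (\<lambda>z. f z + g z) p (d + e)"
  unfolding H2_def by (rule has_vector_derivative_add)
lemma H1_scale: "H1 f p d \<Longrightarrow> H1 (\<lambda>z. c *\<^sub>R f z) p (c *\<^sub>R d)"
  unfolding H1_def by (rule bounded_linear.has_vector_derivative[OF bounded_linear_scaleR_right])
lemma H2_scale: "H2 f p d \<Longrightarrow> H2 (\<lambda>z. c *\<^sub>R f z) p (c *\<^sub>R d)"
  unfolding H2_def by (rule bounded_linear.has_vector_derivative[OF bounded_linear_scaleR_right])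
lemma H1_const: "H1 (\<lambda>z. c) p 0"
  unfolding H1_def by (rule has_vector_derivative_const)
lemma H2_const: "H2 (\<lambda>z. c) p 0"
  unfolding H2_def by (rule has_vector_derivative_const)
lemma H1_fst: "H1 (\<lambda>z. fst z) p 1"
  unfolding H1_def by (simp add: rd_iff)
lemma H2_fst: "H2 (\<lambda>z. fst z) p 0"
  unfolding H2_def by (simp add: rd_iff)
lemma H1_snd: "H1 (\<lambda>z. snd z) p 0"
  unfolding H1_def by (simp add: rd_iff)
lemma H2_snd: "H2 (\<lambda>z. snd z) p 1"
  unfolding H2_def by (simp add: rd_iff)

lemma H1_mult: "H1 (f::real\<times>real\<Rightarrow>real) p d \<Longrightarrow> H1 g p e \<Longrightarrow> H1 (\<lambda>z. f z * g z) p (d * g p + f p * e)"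
  unfolding H1_def rd_iff
  by (drule (1) DERIV_mult) (simp add: algebra_simps)
lemma H2_mult: "H2 (f::real\<times>real\<Rightarrow>real) p d \<Longrightarrow> H2 g p e \<Longrightarrow> H2 (\<lambda>z. f z * g z) p (d * g p + f p * e)"
  unfolding H2_def rd_iff
  by (drule (1) DERIV_mult) (simp add: algebra_simps)

lemma H1_comp: "(\<phi> has_real_derivative \<phi>') (at (f p)) \<Longrightarrow> H1 (f::real\<times>real\<Rightarrow>real) p d \<Longrightarrow> H1 (\<lambda>z. \<phi> (f z)) p (\<phi>' * d)"
  unfolding H1_def rd_iff
  using DERIV_chain2[of \<phi> \<phi>' "(\<lambda>s. f (s, snd p))" "fst p" d] by simp
lemma H2_comp: "(\<phi> has_real_derivative \<phi>') (at (f p)) \<Longrightarrow> H2 (f::real\<times>real\<Rightarrow>real) p d \<Longrightarrow> H2 (\<lambda>z. \<phi> (f z)) p (\<phi>' * d)"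
  unfolding H2_def rd_iff
  using DERIV_chain2[of \<phi> \<phi>' "(\<lambda>s. f (fst p, s))" "snd p" d] by simp

lemma H1_inner: "H1 X p d \<Longrightarrow> H1 (\<lambda>z. X z \<bullet> a) p (d \<bullet> a)"
  unfolding H1_def has_vector_derivative_def
  by (drule has_derivative_inner_left[where b=a]) (simp add: inner_scaleR_left)
lemma H2_inner: "H2 X p d \<Longrightarrow> H2 (\<lambda>z. X z \<bullet> a) p (d \<bullet> a)"
  unfolding H2_def has_vector_derivative_def
  by (drule has_derivative_inner_left[where b=a]) (simp add: inner_scaleR_left)

lemma Ck_SucI:
  assumes S: "open S" and c: "continuous_on S f"
    and h1: "\<And>p. p \<in> S \<Longrightarrow> H1 f p (da p)" and h2: "\<And>p. p \<in> S \<Longrightarrow> H2 f p (db p)"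
    and k1: "Ck_on k S da" and k2: "Ck_on k S db"
  shows "Ck_on (Suc k) S f"
proof -
  have "Ck_on k S (pd1 f)" by (rule Ck_cong[OF S _ k1]) (use h1 H1_pd1 in metis)
  moreover have "Ck_on k S (pd2 f)" by (rule Ck_cong[OF S _ k2]) (use h2 H2_pd2 in metis)
  moreover have "\<forall>p\<in>S. (\<lambda>t. f (fst p + t, snd p)) differentiable (at 0) \<and> (\<lambda>t. f (fst p, snd p + t)) differentiable (at 0)"
    using h1 h2 H1_diff1 H2_diff2 by blast
  ultimately show ?thesis using c by simp
qed

lemma Ck_const: "open S \<Longrightarrow> Ck_on k S (\<lambda>z. c)"
proof (induction k arbitrary: c)
  case 0 then show ?case by simp
next
  case (Suc k)
  show ?case by (rule Ck_SucI[where da="\<lambda>z. 0" and db="\<lambda>z. 0"]) (use Suc H1_const H2_const in auto)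
qed

lemma Ck_fst: "open S \<Longrightarrow> Ck_on k S (\<lambda>z. fst z)"
proof (cases k)
  case 0 then show ?thesis by (simp add: continuous_on_fst)
next
  case (Suc j)
  assume S: "open S"
  show ?thesis unfolding Suc
    by (rule Ck_SucI[where da="\<lambda>z. 1" and db="\<lambda>z. 0"]) (use S Ck_const H1_fst H2_fst in \<open>auto intro: continuous_intros\<close>)
qed

lemma Ck_snd: "open S \<Longrightarrow> Ck_on k S (\<lambda>z. snd z)"
proof (cases k)
  case 0 then show ?thesis by (simp add: continuous_on_snd)
next
  case (Suc j)
  assume S: "open S"
  show ?thesis unfolding Suc
    by (rule Ck_SucI[where da="\<lambda>z. 0" and db="\<lambda>z. 1"]) (use S Ck_const H1_snd H2_snd in \<open>auto intro: continuous_intros\<close>)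
qed

lemma Ck_add: "open S \<Longrightarrow> Ck_on k S f \<Longrightarrow> Ck_on k S g \<Longrightarrow> Ck_on k S (\<lambda>z. f z + g z)"
proof (induction k arbitrary: f g)
  case 0 then show ?case by (auto intro: continuous_on_add)
next
  case (Suc k)
  show ?case
  proof (rule Ck_SucI[where da="\<lambda>z. pd1 f z + pd1 g z" and db="\<lambda>z. pd2 f z + pd2 g z"])
    show "continuous_on S (\<lambda>z. f z + g z)" using Suc.prems Ck_cont by (blast intro: continuous_on_add)
    show "H1 (\<lambda>z. f z + g z) p (pd1 f p + pd1 g p)" if "p \<in> S" for p
      using Suc.prems that by (blast intro: H1_add Ck_H1)
    show "H2 (\<lambda>z. f z + g z) p (pd2 f p + pd2 g p)" if "p \<in> S" for p
      using Suc.prems that by (blast intro: H2_add Ck_H2)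
    show "Ck_on k S (\<lambda>z. pd1 f z + pd1 g z)" using Suc by simp
    show "Ck_on k S (\<lambda>z. pd2 f z + pd2 g z)" using Suc by simp
  qed (rule Suc.prems)
qed

lemma Ck_scale: "open S \<Longrightarrow> Ck_on k S f \<Longrightarrow> Ck_on k S (\<lambda>z. c *\<^sub>R f z)"
proof (induction k arbitrary: f)
  case 0 then show ?case by (auto intro: continuous_intros)
next
  case (Suc k)
  show ?case
  proof (rule Ck_SucI[where da="\<lambda>z. c *\<^sub>R pd1 f z" and db="\<lambda>z. c *\<^sub>R pd2 f z"])
    have "continuous_on S f" using Suc.prems(2) Ck_cont by blast
    then show "continuous_on S (\<lambda>z. c *\<^sub>R f z)" by (intro continuous_intros)
    show "H1 (\<lambda>z. c *\<^sub>R f z) p (c *\<^sub>R pd1 f p)" if "p \<in> S" for p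
      using Suc.prems that by (blast intro: H1_scale Ck_H1)
    show "H2 (\<lambda>z. c *\<^sub>R f z) p (c *\<^sub>R pd2 f p)" if "p \<in> S" for p
      using Suc.prems that by (blast intro: H2_scale Ck_H2)
    show "Ck_on k S (\<lambda>z. c *\<^sub>R pd1 f z)" using Suc by simp
    show "Ck_on k S (\<lambda>z. c *\<^sub>R pd2 f z)" using Suc by simp
  qed (rule Suc.prems)
qed

lemma Ck_mult: "open S \<Longrightarrow> Ck_on k S (f::real\<times>real\<Rightarrow>real) \<Longrightarrow> Ck_on k S g \<Longrightarrow> Ck_on k S (\<lambda>z. f z * g z)"
proof (induction k arbitrary: f g)
  case 0 then show ?case by (auto intro: continuous_on_mult)
next
  case (Suc k)
  have f: "Ck_on k S f" and g: "Ck_on k S g" using Suc.prems Ck_mono by blast+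
  show ?case
  proof (rule Ck_SucI[where da="\<lambda>z. pd1 f z * g z + f z * pd1 g z" and db="\<lambda>z. pd2 f z * g z + f z * pd2 g z"])
    show "continuous_on S (\<lambda>z. f z * g z)" using Suc.prems Ck_cont by (blast intro: continuous_on_mult)
    show "H1 (\<lambda>z. f z * g z) p (pd1 f p * g p + f p * pd1 g p)" if "p \<in> S" for p
      using Suc.prems that by (blast intro: H1_mult Ck_H1)
    show "H2 (\<lambda>z. f z * g z) p (pd2 f p * g p + f p * pd2 g p)" if "p \<in> S" for p
      using Suc.prems that by (blast intro: H2_mult Ck_H2)
    show "Ck_on k S (\<lambda>z. pd1 f z * g z + f z * pd1 g z)"
      using Suc f g by (intro Ck_add) simp_all
    show "Ck_on k S (\<lambda>z. pd2 f z * g z + f z * pd2 g z)"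
      using Suc f g by (intro Ck_add) simp_all
  qed (rule Suc.prems)
qed

lemma Ck_exp: "open S \<Longrightarrow> Ck_on k S (f::real\<times>real\<Rightarrow>real) \<Longrightarrow> Ck_on k S (\<lambda>z. exp (f z))"
proof (induction k arbitrary: f)
  case 0 then show ?case by (auto intro: continuous_intros)
next
  case (Suc k)
  have f: "Ck_on k S f" using Suc.prems Ck_mono by blast
  show ?case
  proof (rule Ck_SucI[where da="\<lambda>z. exp (f z) * pd1 f z" and db="\<lambda>z. exp (f z) * pd2 f z"])
    show "continuous_on S (\<lambda>z. exp (f z))" using Suc.prems Ck_cont by (blast intro: continuous_intros)
    show "H1 (\<lambda>z. exp (f z)) p (exp (f p) * pd1 f p)" if "p \<in> S" for p
      using Suc.prems that by (blast intro: H1_comp Ck_H1 DERIV_exp)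
    show "H2 (\<lambda>z. exp (f z)) p (exp (f p) * pd2 f p)" if "p \<in> S" for p
      using Suc.prems that by (blast intro: H2_comp Ck_H2 DERIV_exp)
    show "Ck_on k S (\<lambda>z. exp (f z) * pd1 f z)"
      using Suc f by (intro Ck_mult) simp_all
    show "Ck_on k S (\<lambda>z. exp (f z) * pd2 f z)"
      using Suc f by (intro Ck_mult) simp_all
  qed (rule Suc.prems)
qed

lemma Ck_inner: "open S \<Longrightarrow> Ck_on k S X \<Longrightarrow> Ck_on k S (\<lambda>z. X z \<bullet> a)"
proof (induction k arbitrary: X)
  case 0 then show ?case by (auto intro: continuous_intros)
next
  case (Suc k)
  show ?case
  proof (rule Ck_SucI[where da="\<lambda>z. pd1 X z \<bullet> a" and db="\<lambda>z. pd2 X z \<bullet> a"])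
    have "continuous_on S X" using Suc.prems(2) Ck_cont by blast
    then show "continuous_on S (\<lambda>z. X z \<bullet> a)" by (intro continuous_intros)
    show "H1 (\<lambda>z. X z \<bullet> a) p (pd1 X p \<bullet> a)" if "p \<in> S" for p
      using Suc.prems that by (blast intro: H1_inner Ck_H1)
    show "H2 (\<lambda>z. X z \<bullet> a) p (pd2 X p \<bullet> a)" if "p \<in> S" for p
      using Suc.prems that by (blast intro: H2_inner Ck_H2)
    show "Ck_on k S (\<lambda>z. pd1 X z \<bullet> a)" using Suc by simp
    show "Ck_on k S (\<lambda>z. pd2 X z \<bullet> a)" using Suc by simp
  qed (rule Suc.prems)
qed


lemma D_pos:
  fixes X1 X2 :: "real^3"
  assumes inj: "inj (\<lambda>(s, t). s *\<^sub>R X1 + t *\<^sub>R X2)"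
  shows "(X1 \<bullet> X1) * (X2 \<bullet> X2) - (X1 \<bullet> X2)^2 > 0"
proof -
  have eq: "(X1 \<bullet> X1) * (X2 \<bullet> X2) - (X1 \<bullet> X2)^2 = (norm (cross3 X1 X2))\<^sup>2"
    using norm_cross[of X1 X2] by (simp only: power2_norm_eq_inner)
  have "cross3 X1 X2 \<noteq> 0"
  proof
    assume c: "cross3 X1 X2 = 0"
    have L: "(X1 \<bullet> X2) *\<^sub>R X1 - (X1 \<bullet> X1) *\<^sub>R X2 = 0"
      using Lagrange[of X1 X1 X2] c by simp
    show False
    proof (cases "X1 \<bullet> X1 = 0")
      case True
      then have "X1 = 0" by simp
      then have "(\<lambda>(s, t). s *\<^sub>R X1 + t *\<^sub>R X2) (1, 0) = (\<lambda>(s, t). s *\<^sub>R X1 + t *\<^sub>R X2) (0, 0)" by simp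
      then have "((1::real), (0::real)) = (0, 0)" by (rule injD[OF inj])
      then show False by simp
    next
      case False
      have "(\<lambda>(s, t). s *\<^sub>R X1 + t *\<^sub>R X2) (X1 \<bullet> X2, - (X1 \<bullet> X1)) = (\<lambda>(s, t). s *\<^sub>R X1 + t *\<^sub>R X2) (0, 0)"
        using L by (simp add: algebra_simps)
      then have "(X1 \<bullet> X2, - (X1 \<bullet> X1)) = ((0::real), (0::real))" by (rule injD[OF inj])
      with False show False by simp
    qed
  qed
  then show ?thesis unfolding eq by simp
qed

lemma perp3_zero:
  fixes X1 X2 n r :: "real^3"
  assumes D: "(X1 \<bullet> X1) * (X2 \<bullet> X2) - (X1 \<bullet> X2)^2 \<noteq> 0"
    and n: "n \<bullet> n = 1" "n \<bullet> X1 = 0" "n \<bullet> X2 = 0"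
    and r: "r \<bullet> n = 0" "r \<bullet> X1 = 0" "r \<bullet> X2 = 0"
  shows "r = 0"
proof -
  define c where "c = cross3 X1 X2"
  have cc: "c \<bullet> c = (X1 \<bullet> X1) * (X2 \<bullet> X2) - (X1 \<bullet> X2)^2"
    unfolding c_def dot_cross by (simp add: power2_eq_square inner_commute)
  have rc: "cross3 r c = 0" unfolding c_def Lagrange using r by (simp add: inner_commute)
  have nc: "cross3 n c = 0" unfolding c_def Lagrange using n by (simp add: inner_commute)
  have r1: "(c \<bullet> c) *\<^sub>R r = (c \<bullet> r) *\<^sub>R c"
    using Lagrange[of c c r] rc cross_skew[of c r] by (simp add: inner_commute)
  have n1: "(c \<bullet> c) *\<^sub>R n = (c \<bullet> n) *\<^sub>R c"
    using Lagrange[of c c n] nc cross_skew[of c n] by (simp add: inner_commute)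
  have "(c \<bullet> c) * (n \<bullet> n) = (c \<bullet> n) * (c \<bullet> n)"
    using arg_cong[OF n1, of "\<lambda>x. x \<bullet> n"] by (simp add: inner_commute)
  then have cn: "(c \<bullet> n) * (c \<bullet> n) = c \<bullet> c" using n by simp
  have "(c \<bullet> c) * (r \<bullet> n) = (c \<bullet> r) * (c \<bullet> n)"
    using arg_cong[OF r1, of "\<lambda>x. x \<bullet> n"] by (simp add: inner_commute)
  then have "(c \<bullet> r) * (c \<bullet> n) = 0" using r by simp
  moreover have "c \<bullet> n \<noteq> 0" using cn cc D by auto
  ultimately have "c \<bullet> r = 0" by simp
  then have "(c \<bullet> c) *\<^sub>R r = 0" using r1 by simp
  then show "r = 0" using cc D by simp
qed

lemma alg1: fixes E F G a1 a2 :: real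
  assumes "E * G - F^2 \<noteq> 0"
  shows "a1 - ((G * a1 - F * a2) / (E * G - F^2)) * E - ((E * a2 - F * a1) / (E * G - F^2)) * F = 0"
    and "a2 - ((G * a1 - F * a2) / (E * G - F^2)) * F - ((E * a2 - F * a1) / (E * G - F^2)) * G = 0"
proof -
  have "a1 * (E * G - F^2) - (G * a1 - F * a2) * E - (E * a2 - F * a1) * F = 0"
    by (simp add: algebra_simps power2_eq_square)
  then show "a1 - ((G * a1 - F * a2) / (E * G - F^2)) * E - ((E * a2 - F * a1) / (E * G - F^2)) * F = 0"
    using assms by (simp add: divide_simps)
  have "a2 * (E * G - F^2) - (G * a1 - F * a2) * F - (E * a2 - F * a1) * G = 0"
    by (simp add: algebra_simps power2_eq_square)
  then show "a2 - ((G * a1 - F * a2) / (E * G - F^2)) * F - ((E * a2 - F * a1) / (E * G - F^2)) * G = 0"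
    using assms by (simp add: divide_simps)
qed

lemma proj_formula:
  fixes X1 X2 n a :: "real^3"
  assumes D: "(X1 \<bullet> X1) * (X2 \<bullet> X2) - (X1 \<bullet> X2)^2 \<noteq> 0"
    and n: "n \<bullet> n = 1" "n \<bullet> X1 = 0" "n \<bullet> X2 = 0"
  shows "(((X2 \<bullet> X2) * (X1 \<bullet> a) - (X1 \<bullet> X2) * (X2 \<bullet> a)) / ((X1 \<bullet> X1) * (X2 \<bullet> X2) - (X1 \<bullet> X2)^2)) *\<^sub>R X1
       + (((X1 \<bullet> X1) * (X2 \<bullet> a) - (X1 \<bullet> X2) * (X1 \<bullet> a)) / ((X1 \<bullet> X1) * (X2 \<bullet> X2) - (X1 \<bullet> X2)^2)) *\<^sub>R X2
       = a - (a \<bullet> n) *\<^sub>R n"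
    (is "?al *\<^sub>R X1 + ?be *\<^sub>R X2 = _")
proof -
  define r where "r = a - (a \<bullet> n) *\<^sub>R n - (?al *\<^sub>R X1 + ?be *\<^sub>R X2)"
  have "r \<bullet> n = 0" unfolding r_def using n
    by (simp only: inner_diff_left inner_add_left inner_scaleR_left inner_commute[of X1 n] inner_commute[of X2 n])
  moreover have "r \<bullet> X1 = 0"
  proof -
    have "r \<bullet> X1 = (X1 \<bullet> a) - ?al * (X1 \<bullet> X1) - ?be * (X1 \<bullet> X2)"
      unfolding r_def using n
      by (simp only: inner_diff_left inner_add_left inner_scaleR_left inner_commute[of X2 X1] inner_commute[of a X1], simp?)
    also have "\<dots> = 0" by (rule alg1(1)[OF D])
    finally show ?thesis .
  qed
  moreover have "r \<bullet> X2 = 0"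
  proof -
    have "r \<bullet> X2 = (X2 \<bullet> a) - ?al * (X1 \<bullet> X2) - ?be * (X2 \<bullet> X2)"
      unfolding r_def using n
      by (simp only: inner_diff_left inner_add_left inner_scaleR_left inner_commute[of a X2], simp?)
    also have "\<dots> = 0" by (rule alg1(2)[OF D])
    finally show ?thesis .
  qed
  ultimately have "r = 0" using perp3_zero[OF D n] by blast
  then show ?thesis unfolding r_def by simp
qed


definition Lop :: "(real \<Rightarrow> real) \<Rightarrow> (real \<times> real \<Rightarrow> real^3) \<Rightarrow> (real \<times> real \<Rightarrow> real) \<Rightarrow> real \<times> real \<Rightarrow> real" where
  "Lop \<phi> X g q = lap_local X g q + tgrad X (\<lambda>r. \<phi> (X r \<bullet> e3)) q \<bullet> tgrad X g q"

lemma lap_phi_Lop: "lap_phi_local \<phi> F x u q = Lop \<phi> (F \<circ> x) (u \<circ> x) q"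
  by (simp add: lap_phi_local_def Lop_def o_def)

definition frame_at :: "(real \<times> real \<Rightarrow> real^3) \<Rightarrow> real^3 \<Rightarrow> real \<times> real \<Rightarrow> bool" where
  "frame_at X n q \<longleftrightarrow> n \<bullet> n = 1 \<and> n \<bullet> pd1 X q = 0 \<and> n \<bullet> pd2 X q = 0 \<and> metric_det X q \<noteq> 0"

lemma tgrad_eq:
  assumes "pd1 g q = g1" "pd2 g q = g2"
  shows "tgrad X g q = g1 *\<^sub>R (((pd2 X q \<bullet> pd2 X q) / metric_det X q) *\<^sub>R pd1 X q - ((pd1 X q \<bullet> pd2 X q) / metric_det X q) *\<^sub>R pd2 X q)
                     + g2 *\<^sub>R (((pd1 X q \<bullet> pd1 X q) / metric_det X q) *\<^sub>R pd2 X q - ((pd1 X q \<bullet> pd2 X q) / metric_det X q) *\<^sub>R pd1 X q)"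
  unfolding tgrad_def Let_def metric_det_def assms
  by (simp add: algebra_simps diff_divide_distrib add_divide_distrib)

lemma tgrad_lin:
  assumes fr: "frame_at X n q" and H: "H1 X q X1" "H2 X q X2"
  shows "tgrad X (\<lambda>z. X z \<bullet> a) q = a - (a \<bullet> n) *\<^sub>R n"
proof -
  have X1: "pd1 X q = X1" and X2: "pd2 X q = X2" using H H1_pd1 H2_pd2 by blast+
  have p1: "pd1 (\<lambda>z. X z \<bullet> a) q = X1 \<bullet> a" using H1_inner[OF H(1)] H1_pd1 by blast
  have p2: "pd2 (\<lambda>z. X z \<bullet> a) q = X2 \<bullet> a" using H2_inner[OF H(2)] H2_pd2 by blast
  have D: "(X1 \<bullet> X1) * (X2 \<bullet> X2) - (X1 \<bullet> X2)^2 \<noteq> 0" and n: "n \<bullet> n = 1" "n \<bullet> X1 = 0" "n \<bullet> X2 = 0"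
    using fr X1 X2 unfolding frame_at_def metric_det_def by auto
  show ?thesis
    unfolding tgrad_def Let_def p1 p2 X1 X2 by (rule proj_formula[OF D n])
qed

lemma pd_inner1:
  assumes "Ck_on (Suc k) V X" "z \<in> V"
  shows "pd1 (\<lambda>z. X z \<bullet> a) z = pd1 X z \<bullet> a" "pd2 (\<lambda>z. X z \<bullet> a) z = pd2 X z \<bullet> a"
  using H1_inner[OF Ck_H1[OF assms]] H2_inner[OF Ck_H2[OF assms]] H1_pd1 H2_pd2 by blast+

lemma pd_inner2:
  assumes V: "open V" and X: "Ck_on 2 V X" and q: "q \<in> V"
  shows "pd1 (pd1 (\<lambda>z. X z \<bullet> a)) q = pd1 (pd1 X) q \<bullet> a"
    "pd2 (pd1 (\<lambda>z. X z \<bullet> a)) q = pd2 (pd1 X) q \<bullet> a"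
    "pd1 (pd2 (\<lambda>z. X z \<bullet> a)) q = pd1 (pd2 X) q \<bullet> a"
    "pd2 (pd2 (\<lambda>z. X z \<bullet> a)) q = pd2 (pd2 X) q \<bullet> a"
proof -
  have X2: "Ck_on (Suc 1) V X" using X by (simp add: numeral_2_eq_2)
  have c1: "\<And>z. z \<in> V \<Longrightarrow> pd1 (\<lambda>z. X z \<bullet> a) z = pd1 X z \<bullet> a" using pd_inner1[OF X2] by blast
  have c2: "\<And>z. z \<in> V \<Longrightarrow> pd2 (\<lambda>z. X z \<bullet> a) z = pd2 X z \<bullet> a" using pd_inner1[OF X2] by blast
  have k1: "Ck_on (Suc 0) V (pd1 X)" "Ck_on (Suc 0) V (pd2 X)" using X by (simp_all add: numeral_2_eq_2)
  show "pd1 (pd1 (\<lambda>z. X z \<bullet> a)) q = pd1 (pd1 X) q \<bullet> a"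
    using pd1_cong[OF V q c1] pd_inner1[OF k1(1) q] by simp
  show "pd2 (pd1 (\<lambda>z. X z \<bullet> a)) q = pd2 (pd1 X) q \<bullet> a"
    using pd2_cong[OF V q c1] pd_inner1[OF k1(1) q] by simp
  show "pd1 (pd2 (\<lambda>z. X z \<bullet> a)) q = pd1 (pd2 X) q \<bullet> a"
    using pd1_cong[OF V q c2] pd_inner1[OF k1(2) q] by simp
  show "pd2 (pd2 (\<lambda>z. X z \<bullet> a)) q = pd2 (pd2 X) q \<bullet> a"
    using pd2_cong[OF V q c2] pd_inner1[OF k1(2) q] by simp
qed

lemma lap_lin:
  assumes V: "open V" and X: "Ck_on 2 V X" and q: "q \<in> V" and fr: "frame_at X n q"
  shows "lap_local X (\<lambda>z. X z \<bullet> a) q = mean_curv_vec X n q \<bullet> a"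
proof -
  have X2: "Ck_on (Suc 1) V X" using X by (simp add: numeral_2_eq_2)
  have tg: "tgrad X (\<lambda>z. X z \<bullet> a) q = a - (a \<bullet> n) *\<^sub>R n"
    by (rule tgrad_lin[OF fr Ck_H1[OF X2 q] Ck_H2[OF X2 q]])
  define E where "E = pd1 X q \<bullet> pd1 X q"
  define Fm where "Fm = pd1 X q \<bullet> pd2 X q"
  define G where "G = pd2 X q \<bullet> pd2 X q"
  define L where "L = pd1 (pd1 X) q \<bullet> n"
  define M where "M = pd2 (pd1 X) q \<bullet> n"
  define Nn where "Nn = pd2 (pd2 X) q \<bullet> n"
  have e1: "pd1 (pd1 X) q \<bullet> a - pd1 (pd1 X) q \<bullet> (a - (a \<bullet> n) *\<^sub>R n) = (a \<bullet> n) * L"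
    unfolding L_def by (simp add: inner_diff_right)
  have e2: "pd2 (pd1 X) q \<bullet> a - pd2 (pd1 X) q \<bullet> (a - (a \<bullet> n) *\<^sub>R n) = (a \<bullet> n) * M"
    unfolding M_def by (simp add: inner_diff_right)
  have e3: "pd2 (pd2 X) q \<bullet> a - pd2 (pd2 X) q \<bullet> (a - (a \<bullet> n) *\<^sub>R n) = (a \<bullet> n) * Nn"
    unfolding Nn_def by (simp add: inner_diff_right)
  have "lap_local X (\<lambda>z. X z \<bullet> a) q = (G * ((a \<bullet> n) * L) - 2 * Fm * ((a \<bullet> n) * M) + E * ((a \<bullet> n) * Nn)) / (E * G - Fm^2)"
    unfolding lap_local_def Let_def tg pd_inner2[OF V X q] e1 e2 e3 E_def Fm_def G_def pd_inner1[OF X2 q] by simp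
  also have "\<dots> = ((G * L - 2 * Fm * M + E * Nn) / (E * G - Fm^2)) * (n \<bullet> a)"
    by (simp add: algebra_simps inner_commute divide_simps)
  also have "\<dots> = mean_curv_vec X n q \<bullet> a"
    unfolding mean_curv_vec_def Let_def E_def Fm_def G_def L_def M_def Nn_def by simp
  finally show ?thesis .
qed

lemma tgrad_scale:
  assumes "pd1 g q = c * pd1 h q" "pd2 g q = c * pd2 h q"
  shows "tgrad X g q = c *\<^sub>R tgrad X h q"
  unfolding tgrad_def Let_def assms
  by (simp add: algebra_simps scaleR_add_right)

lemma tgrad_phi:
  assumes fr: "frame_at X n q" and H: "H1 X q X1" "H2 X q X2"
    and phi: "\<phi> differentiable (at (X q \<bullet> e3))"
  shows "tgrad X (\<lambda>r. \<phi> (X r \<bullet> e3)) q = deriv \<phi> (X q \<bullet> e3) *\<^sub>R (e3 - (e3 \<bullet> n) *\<^sub>R n)"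
proof -
  have d: "(\<phi> has_real_derivative deriv \<phi> (X q \<bullet> e3)) (at (X q \<bullet> e3))"
    using phi DERIV_deriv_iff_real_differentiable by blast
  have a1: "H1 (\<lambda>z. X z \<bullet> e3) q (X1 \<bullet> e3)" using H1_inner[OF H(1)] .
  have a2: "H2 (\<lambda>z. X z \<bullet> e3) q (X2 \<bullet> e3)" using H2_inner[OF H(2)] .
  have "pd1 (\<lambda>r. \<phi> (X r \<bullet> e3)) q = deriv \<phi> (X q \<bullet> e3) * pd1 (\<lambda>z. X z \<bullet> e3) q"
    using H1_comp[OF d a1] H1_pd1 a1 by metis
  moreover have "pd2 (\<lambda>r. \<phi> (X r \<bullet> e3)) q = deriv \<phi> (X q \<bullet> e3) * pd2 (\<lambda>z. X z \<bullet> e3) q"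
    using H2_comp[OF d a2] H2_pd2 a2 by metis
  ultimately have "tgrad X (\<lambda>r. \<phi> (X r \<bullet> e3)) q = deriv \<phi> (X q \<bullet> e3) *\<^sub>R tgrad X (\<lambda>z. X z \<bullet> e3) q"
    by (rule tgrad_scale)
  then show ?thesis using tgrad_lin[OF fr H] by simp
qed

lemma Lop_lin:
  assumes V: "open V" and X: "Ck_on 2 V X" and q: "q \<in> V" and fr: "frame_at X n q"
    and phi: "\<phi> differentiable (at (X q \<bullet> e3))"
    and mc: "mean_curv_vec X n q = (deriv \<phi> (X q \<bullet> e3) * (n \<bullet> e3)) *\<^sub>R n"
  shows "Lop \<phi> X (\<lambda>z. X z \<bullet> a) q = deriv \<phi> (X q \<bullet> e3) * (e3 \<bullet> a)"
proof -
  have X2: "Ck_on (Suc 1) V X" using X by (simp add: numeral_2_eq_2)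
  have tg: "tgrad X (\<lambda>z. X z \<bullet> a) q = a - (a \<bullet> n) *\<^sub>R n"
    by (rule tgrad_lin[OF fr Ck_H1[OF X2 q] Ck_H2[OF X2 q]])
  have tp: "tgrad X (\<lambda>r. \<phi> (X r \<bullet> e3)) q = deriv \<phi> (X q \<bullet> e3) *\<^sub>R (e3 - (e3 \<bullet> n) *\<^sub>R n)"
    by (rule tgrad_phi[OF fr Ck_H1[OF X2 q] Ck_H2[OF X2 q] phi])
  have nn: "n \<bullet> n = 1" using fr frame_at_def by blast
  have "Lop \<phi> X (\<lambda>z. X z \<bullet> a) q = deriv \<phi> (X q \<bullet> e3) * (n \<bullet> e3) * (n \<bullet> a)
      + deriv \<phi> (X q \<bullet> e3) * ((e3 - (e3 \<bullet> n) *\<^sub>R n) \<bullet> (a - (a \<bullet> n) *\<^sub>R n))"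
    unfolding Lop_def lap_lin[OF V X q fr] mc tg tp by simp
  also have "(e3 - (e3 \<bullet> n) *\<^sub>R n) \<bullet> (a - (a \<bullet> n) *\<^sub>R n) = e3 \<bullet> a - (e3 \<bullet> n) * (a \<bullet> n)"
    using nn by (simp add: inner_diff_left inner_diff_right inner_commute)
  finally show ?thesis by (simp add: algebra_simps inner_commute)
qed


lemma alg2: fixes E F G f1 f2 :: real
  assumes D: "E * G - F^2 \<noteq> 0"
  shows "((G * f1 - F * f2) / (E * G - F^2)) * ((G * f1 - F * f2) / (E * G - F^2)) * E
       + 2 * ((G * f1 - F * f2) / (E * G - F^2)) * ((E * f2 - F * f1) / (E * G - F^2)) * F
       + ((E * f2 - F * f1) / (E * G - F^2)) * ((E * f2 - F * f1) / (E * G - F^2)) * G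
       = (G * f1 * f1 - 2 * F * f1 * f2 + E * f2 * f2) / (E * G - F^2)"
proof -
  define al where "al = (G * f1 - F * f2) / (E * G - F^2)"
  define be where "be = (E * f2 - F * f1) / (E * G - F^2)"
  have h1: "al * E + be * F = f1"
    using alg1(1)[OF D, of f1 f2] unfolding al_def be_def by (simp add: algebra_simps)
  have h2: "al * F + be * G = f2"
    using alg1(2)[OF D, of f2 f1] unfolding al_def be_def by (simp add: algebra_simps)
  have "al * al * E + 2 * al * be * F + be * be * G = al * (al * E + be * F) + be * (al * F + be * G)"
    by (simp add: algebra_simps)
  also have "\<dots> = al * f1 + be * f2" using h1 h2 by simp
  also have "\<dots> = ((G * f1 - F * f2) * f1 + (E * f2 - F * f1) * f2) / (E * G - F^2)"
    unfolding al_def be_def by (simp add: add_divide_distrib)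
  also have "(G * f1 - F * f2) * f1 + (E * f2 - F * f1) * f2 = G * f1 * f1 - 2 * F * f1 * f2 + E * f2 * f2"
    by (simp add: algebra_simps)
  finally show ?thesis unfolding al_def be_def .
qed

lemma grad_sq:
  assumes D: "metric_det X q \<noteq> 0"
  shows "tgrad X g q \<bullet> tgrad X g q =
    ((pd2 X q \<bullet> pd2 X q) * pd1 g q * pd1 g q - 2 * (pd1 X q \<bullet> pd2 X q) * pd1 g q * pd2 g q
     + (pd1 X q \<bullet> pd1 X q) * pd2 g q * pd2 g q) / metric_det X q"
proof -
  define E where "E = pd1 X q \<bullet> pd1 X q"
  define F where "F = pd1 X q \<bullet> pd2 X q"
  define G where "G = pd2 X q \<bullet> pd2 X q"
  define al where "al = (G * pd1 g q - F * pd2 g q) / (E * G - F^2)"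
  define be where "be = (E * pd2 g q - F * pd1 g q) / (E * G - F^2)"
  have D': "E * G - F^2 \<noteq> 0" using D unfolding metric_det_def E_def F_def G_def .
  have t: "tgrad X g q = al *\<^sub>R pd1 X q + be *\<^sub>R pd2 X q"
    unfolding tgrad_def Let_def al_def be_def E_def F_def G_def ..
  have "tgrad X g q \<bullet> tgrad X g q = al * al * E + 2 * al * be * F + be * be * G"
    unfolding t E_def F_def G_def by (simp add: inner_add_left inner_add_right inner_commute algebra_simps)
  also have "\<dots> = (G * pd1 g q * pd1 g q - 2 * F * pd1 g q * pd2 g q + E * pd2 g q * pd2 g q) / (E * G - F^2)"
    unfolding al_def be_def by (rule alg2[OF D'])
  finally show ?thesis unfolding E_def F_def G_def metric_det_def .
qed

lemma pd_exp:
  assumes V: "open V" and f: "Ck_on 2 V (f::real\<times>real\<Rightarrow>real)" and q: "q \<in> V"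
  shows "pd1 (\<lambda>z. exp (f z)) q = exp (f q) * pd1 f q"
    "pd2 (\<lambda>z. exp (f z)) q = exp (f q) * pd2 f q"
    "pd1 (pd1 (\<lambda>z. exp (f z))) q = exp (f q) * pd1 f q * pd1 f q + exp (f q) * pd1 (pd1 f) q"
    "pd2 (pd1 (\<lambda>z. exp (f z))) q = exp (f q) * pd2 f q * pd1 f q + exp (f q) * pd2 (pd1 f) q"
    "pd2 (pd2 (\<lambda>z. exp (f z))) q = exp (f q) * pd2 f q * pd2 f q + exp (f q) * pd2 (pd2 f) q"
proof -
  have f2: "Ck_on (Suc 1) V f" using f by (simp add: numeral_2_eq_2)
  have k1: "Ck_on (Suc 0) V (pd1 f)" "Ck_on (Suc 0) V (pd2 f)" using f by (simp_all add: numeral_2_eq_2)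
  have c1: "pd1 (\<lambda>z. exp (f z)) z = exp (f z) * pd1 f z" if "z \<in> V" for z
    using H1_comp[OF DERIV_exp Ck_H1[OF f2 that]] H1_pd1 by blast
  have c2: "pd2 (\<lambda>z. exp (f z)) z = exp (f z) * pd2 f z" if "z \<in> V" for z
    using H2_comp[OF DERIV_exp Ck_H2[OF f2 that]] H2_pd2 by blast
  show "pd1 (\<lambda>z. exp (f z)) q = exp (f q) * pd1 f q" using c1 q .
  show "pd2 (\<lambda>z. exp (f z)) q = exp (f q) * pd2 f q" using c2 q .
  have "pd1 (pd1 (\<lambda>z. exp (f z))) q = pd1 (\<lambda>z. exp (f z) * pd1 f z) q"
    by (rule pd1_cong[OF V q c1])
  also have "\<dots> = exp (f q) * pd1 f q * pd1 f q + exp (f q) * pd1 (pd1 f) q"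
    using H1_mult[OF H1_comp[OF DERIV_exp Ck_H1[OF f2 q]] Ck_H1[OF k1(1) q]] H1_pd1 by metis
  finally show "pd1 (pd1 (\<lambda>z. exp (f z))) q = exp (f q) * pd1 f q * pd1 f q + exp (f q) * pd1 (pd1 f) q" .
  have "pd2 (pd1 (\<lambda>z. exp (f z))) q = pd2 (\<lambda>z. exp (f z) * pd1 f z) q"
    by (rule pd2_cong[OF V q c1])
  also have "\<dots> = exp (f q) * pd2 f q * pd1 f q + exp (f q) * pd2 (pd1 f) q"
    using H2_mult[OF H2_comp[OF DERIV_exp Ck_H2[OF f2 q]] Ck_H2[OF k1(1) q]] H2_pd2 by metis
  finally show "pd2 (pd1 (\<lambda>z. exp (f z))) q = exp (f q) * pd2 f q * pd1 f q + exp (f q) * pd2 (pd1 f) q" .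
  have "pd2 (pd2 (\<lambda>z. exp (f z))) q = pd2 (\<lambda>z. exp (f z) * pd2 f z) q"
    by (rule pd2_cong[OF V q c2])
  also have "\<dots> = exp (f q) * pd2 f q * pd2 f q + exp (f q) * pd2 (pd2 f) q"
    using H2_mult[OF H2_comp[OF DERIV_exp Ck_H2[OF f2 q]] Ck_H2[OF k1(2) q]] H2_pd2 by metis
  finally show "pd2 (pd2 (\<lambda>z. exp (f z))) q = exp (f q) * pd2 f q * pd2 f q + exp (f q) * pd2 (pd2 f) q" .
qed

lemma Lop_exp:
  assumes V: "open V" and f: "Ck_on 2 V (f::real\<times>real\<Rightarrow>real)" and q: "q \<in> V"
    and D: "metric_det X q \<noteq> 0"
  shows "Lop \<phi> X (\<lambda>z. exp (f z)) q = exp (f q) * (Lop \<phi> X f q + tgrad X f q \<bullet> tgrad X f q)"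
proof -
  note pe = pd_exp[OF V f q]
  have tg: "tgrad X (\<lambda>z. exp (f z)) q = exp (f q) *\<^sub>R tgrad X f q"
    by (rule tgrad_scale) (simp_all add: pe)
  define T where "T = tgrad X f q"
  define E where "E = pd1 X q \<bullet> pd1 X q"
  define F where "F = pd1 X q \<bullet> pd2 X q"
  define G where "G = pd2 X q \<bullet> pd2 X q"
  have D': "E * G - F^2 \<noteq> 0" using D unfolding metric_det_def E_def F_def G_def .
  have sq: "T \<bullet> T = (G * pd1 f q * pd1 f q - 2 * F * pd1 f q * pd2 f q + E * pd2 f q * pd2 f q) / (E * G - F^2)"
    unfolding T_def E_def F_def G_def grad_sq[OF D] metric_det_def ..
  define e where "e = exp (f q)"
  define Nf where "Nf = G * (pd1 (pd1 f) q - pd1 (pd1 X) q \<bullet> T)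
         - 2 * F * (pd2 (pd1 f) q - pd2 (pd1 X) q \<bullet> T) + E * (pd2 (pd2 f) q - pd2 (pd2 X) q \<bullet> T)"
  define Q where "Q = G * pd1 f q * pd1 f q - 2 * F * pd1 f q * pd2 f q + E * pd2 f q * pd2 f q"
  have num: "G * (e * pd1 f q * pd1 f q + e * pd1 (pd1 f) q - pd1 (pd1 X) q \<bullet> (e *\<^sub>R T))
      - 2 * F * (e * pd2 f q * pd1 f q + e * pd2 (pd1 f) q - pd2 (pd1 X) q \<bullet> (e *\<^sub>R T))
      + E * (e * pd2 f q * pd2 f q + e * pd2 (pd2 f) q - pd2 (pd2 X) q \<bullet> (e *\<^sub>R T)) = e * (Nf + Q)"
    unfolding Nf_def Q_def by (simp add: algebra_simps)
  have l1: "lap_local X (\<lambda>z. exp (f z)) q = e * (Nf / (E * G - F^2) + Q / (E * G - F^2))"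
  proof -
    have "lap_local X (\<lambda>z. exp (f z)) q = e * (Nf + Q) / (E * G - F^2)"
      unfolding lap_local_def Let_def tg pe T_def[symmetric] E_def[symmetric] F_def[symmetric] G_def[symmetric]
        e_def[symmetric] num ..
    also have "\<dots> = e * (Nf / (E * G - F^2) + Q / (E * G - F^2))"
      by (simp add: add_divide_distrib[symmetric])
    finally show ?thesis .
  qed
  have l2: "lap_local X f q = (G * (pd1 (pd1 f) q - pd1 (pd1 X) q \<bullet> T)
         - 2 * F * (pd2 (pd1 f) q - pd2 (pd1 X) q \<bullet> T) + E * (pd2 (pd2 f) q - pd2 (pd2 X) q \<bullet> T)) / (E * G - F^2)"
    unfolding lap_local_def Let_def T_def E_def F_def G_def ..
  show ?thesis
    unfolding Lop_def tg l1 l2 T_def[symmetric] sq Nf_def[symmetric] Q_def[symmetric] e_def[symmetric]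
    by (simp add: algebra_simps)
qed


lemma frechet:
  fixes f :: "real \<times> real \<Rightarrow> 'b::real_normed_vector"
  assumes V: "open V" and f: "Ck_on (Suc k) V f" and p: "p \<in> V"
  shows "(f has_derivative (\<lambda>h. fst h *\<^sub>R pd1 f p + snd h *\<^sub>R pd2 f p)) (at p)"
proof -
  obtain A B where AB: "open A" "open B" "p \<in> A \<times> B" "A \<times> B \<subseteq> V"
    using open_prod_elim[OF V p] by blast
  obtain r where r: "r > 0" "ball (snd p) r \<subseteq> B" using AB(2,3) open_contains_ball by (metis mem_Times_iff)
  define Y where "Y = ball (snd p) r"
  have AY: "A \<times> Y \<subseteq> V" using AB(4) r(2) Y_def by blast
  have opAY: "open (A \<times> Y)" using AB(1) Y_def by (simp add: open_Times)
  have pAY: "p \<in> A \<times> Y" using AB(3) r(1) Y_def by (auto simp: mem_Times_iff)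
  have c2: "continuous_on V (pd2 f)" using f Ck_cont by (cases k) auto
  have fx: "((\<lambda>x. f (x, snd p)) has_derivative (\<lambda>t. t *\<^sub>R pd1 f p)) (at (fst p) within A)"
    using Ck_H1[OF f p] unfolding H1_def has_vector_derivative_def by (rule has_derivative_at_withinI)
  have fy: "((\<lambda>y. f (x, y)) has_derivative blinfun_apply (blinfun_scaleR_left (pd2 f (x, y)))) (at y within Y)"
    if "x \<in> A" "y \<in> Y" for x y
  proof -
    have "(x, y) \<in> V" using that AY by blast
    then have "H2 f (x, y) (pd2 f (x, y))" by (rule Ck_H2[OF f])
    then show ?thesis unfolding H2_def has_vector_derivative_def blinfun_scaleR_left.rep_eq
      by (simp add: has_derivative_at_withinI)
  qed
  have cont: "continuous (at (fst p, snd p) within A \<times> Y) (\<lambda>(x, y). blinfun_scaleR_left (pd2 f (x, y)))"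
  proof -
    have "continuous (at p within A \<times> Y) (pd2 f)"
      using c2 p AY continuous_on_eq_continuous_within continuous_within_subset by blast
    then have "continuous (at p within A \<times> Y) (\<lambda>z. blinfun_scaleR_left (pd2 f z))"
      by (intro continuous_intros bounded_linear.continuous[OF bounded_linear_blinfun_scaleR_left])
    then show ?thesis by (simp add: case_prod_beta')
  qed
  have "((\<lambda>(x, y). f (x, y)) has_derivative (\<lambda>(tx, ty). tx *\<^sub>R pd1 f p + blinfun_apply (blinfun_scaleR_left (pd2 f (fst p, snd p))) ty))
          (at (fst p, snd p) within A \<times> Y)"
    by (rule has_derivative_partialsI[OF fx fy cont]) (use r Y_def in auto)
  then have "(f has_derivative (\<lambda>h. fst h *\<^sub>R pd1 f p + snd h *\<^sub>R pd2 f p)) (at p within A \<times> Y)"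
    by (simp add: blinfun_scaleR_left.rep_eq case_prod_beta')
  then show ?thesis using at_within_open[OF pAY opAY] by simp
qed


lemma dist_pair_le: "dist (x::real, y::real) (a, b) \<le> \<bar>x - a\<bar> + \<bar>y - b\<bar>"
  using norm_Pair_le[of "x - a" "y - b"] by (simp add: dist_norm)

lemma mixed_mvt1:
  fixes f :: "real \<times> real \<Rightarrow> real"
  assumes f: "Ck_on 2 V f" and s: "s > 0"
    and sq: "\<And>x y. a \<le> x \<Longrightarrow> x \<le> a + s \<Longrightarrow> b \<le> y \<Longrightarrow> y \<le> b + s \<Longrightarrow> (x, y) \<in> V"
  shows "\<exists>\<xi> \<eta>. a \<le> \<xi> \<and> \<xi> \<le> a + s \<and> b \<le> \<eta> \<and> \<eta> \<le> b + s \<and>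
     f (a + s, b + s) - f (a + s, b) - f (a, b + s) + f (a, b) = s * s * pd2 (pd1 f) (\<xi>, \<eta>)"
proof -
  have f2: "Ck_on (Suc 1) V f" using f by (simp add: numeral_2_eq_2)
  have k1: "Ck_on (Suc 0) V (pd1 f)" using f by (simp add: numeral_2_eq_2)
  have "\<exists>\<xi>>a. \<xi> < a + s \<and> (f (a + s, b + s) - f (a + s, b)) - (f (a, b + s) - f (a, b)) = (a + s - a) * (pd1 f (\<xi>, b + s) - pd1 f (\<xi>, b))"
  proof (rule MVT2[where f="\<lambda>x. f (x, b + s) - f (x, b)"])
    show "a < a + s" using s by simp
    fix x assume x: "a \<le> x" "x \<le> a + s"
    have "H1 f (x, b + s) (pd1 f (x, b + s))" using Ck_H1[OF f2 sq[OF x]] s by simp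
    moreover have "H1 f (x, b) (pd1 f (x, b))" using Ck_H1[OF f2 sq[OF x]] s by simp
    ultimately show "((\<lambda>x. f (x, b + s) - f (x, b)) has_real_derivative pd1 f (x, b + s) - pd1 f (x, b)) (at x)"
      unfolding H1_def rd_iff by (auto intro!: derivative_intros)
  qed
  then obtain \<xi> where xi: "a < \<xi>" "\<xi> < a + s"
    and e1: "f (a + s, b + s) - f (a + s, b) - f (a, b + s) + f (a, b) = s * (pd1 f (\<xi>, b + s) - pd1 f (\<xi>, b))"
    by (auto simp: algebra_simps)
  have "\<exists>\<eta>>b. \<eta> < b + s \<and> pd1 f (\<xi>, b + s) - pd1 f (\<xi>, b) = (b + s - b) * pd2 (pd1 f) (\<xi>, \<eta>)"
  proof (rule MVT2[where f="\<lambda>y. pd1 f (\<xi>, y)"])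
    show "b < b + s" using s by simp
    fix y assume y: "b \<le> y" "y \<le> b + s"
    have "H2 (pd1 f) (\<xi>, y) (pd2 (pd1 f) (\<xi>, y))" using Ck_H2[OF k1 sq] xi y by simp
    then show "((\<lambda>y. pd1 f (\<xi>, y)) has_real_derivative pd2 (pd1 f) (\<xi>, y)) (at y)"
      unfolding H2_def rd_iff by simp
  qed
  then obtain \<eta> where eta: "b < \<eta>" "\<eta> < b + s"
    and e2: "pd1 f (\<xi>, b + s) - pd1 f (\<xi>, b) = s * pd2 (pd1 f) (\<xi>, \<eta>)" by auto
  show ?thesis using xi eta e1 e2 by (intro exI[of _ \<xi>] exI[of _ \<eta>]) auto
qed

lemma mixed_mvt2:
  fixes f :: "real \<times> real \<Rightarrow> real"
  assumes f: "Ck_on 2 V f" and s: "s > 0"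
    and sq: "\<And>x y. a \<le> x \<Longrightarrow> x \<le> a + s \<Longrightarrow> b \<le> y \<Longrightarrow> y \<le> b + s \<Longrightarrow> (x, y) \<in> V"
  shows "\<exists>\<xi> \<eta>. a \<le> \<xi> \<and> \<xi> \<le> a + s \<and> b \<le> \<eta> \<and> \<eta> \<le> b + s \<and>
     f (a + s, b + s) - f (a + s, b) - f (a, b + s) + f (a, b) = s * s * pd1 (pd2 f) (\<xi>, \<eta>)"
proof -
  have f2: "Ck_on (Suc 1) V f" using f by (simp add: numeral_2_eq_2)
  have k1: "Ck_on (Suc 0) V (pd2 f)" using f by (simp add: numeral_2_eq_2)
  have "\<exists>\<eta>>b. \<eta> < b + s \<and> (f (a + s, b + s) - f (a, b + s)) - (f (a + s, b) - f (a, b)) = (b + s - b) * (pd2 f (a + s, \<eta>) - pd2 f (a, \<eta>))"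
  proof (rule MVT2[where f="\<lambda>y. f (a + s, y) - f (a, y)"])
    show "b < b + s" using s by simp
    fix y assume y: "b \<le> y" "y \<le> b + s"
    have "H2 f (a + s, y) (pd2 f (a + s, y))" using Ck_H2[OF f2 sq] y s by simp
    moreover have "H2 f (a, y) (pd2 f (a, y))" using Ck_H2[OF f2 sq] y s by simp
    ultimately show "((\<lambda>y. f (a + s, y) - f (a, y)) has_real_derivative pd2 f (a + s, y) - pd2 f (a, y)) (at y)"
      unfolding H2_def rd_iff by (auto intro!: derivative_intros)
  qed
  then obtain \<eta> where eta: "b < \<eta>" "\<eta> < b + s"
    and e1: "f (a + s, b + s) - f (a + s, b) - f (a, b + s) + f (a, b) = s * (pd2 f (a + s, \<eta>) - pd2 f (a, \<eta>))"
    by (auto simp: algebra_simps)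
  have "\<exists>\<xi>>a. \<xi> < a + s \<and> pd2 f (a + s, \<eta>) - pd2 f (a, \<eta>) = (a + s - a) * pd1 (pd2 f) (\<xi>, \<eta>)"
  proof (rule MVT2[where f="\<lambda>x. pd2 f (x, \<eta>)"])
    show "a < a + s" using s by simp
    fix x assume x: "a \<le> x" "x \<le> a + s"
    have "H1 (pd2 f) (x, \<eta>) (pd1 (pd2 f) (x, \<eta>))" using Ck_H1[OF k1 sq] x eta by simp
    then show "((\<lambda>x. pd2 f (x, \<eta>)) has_real_derivative pd1 (pd2 f) (x, \<eta>)) (at x)"
      unfolding H1_def rd_iff by simp
  qed
  then obtain \<xi> where xi: "a < \<xi>" "\<xi> < a + s"
    and e2: "pd2 f (a + s, \<eta>) - pd2 f (a, \<eta>) = s * pd1 (pd2 f) (\<xi>, \<eta>)" by auto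
  show ?thesis using xi eta e1 e2 by (intro exI[of _ \<xi>] exI[of _ \<eta>]) auto
qed

lemma abs_contra: fixes A B C C' e :: real
  assumes "\<bar>C - A\<bar> < e" "\<bar>C' - B\<bar> < e" "C = C'" "e = \<bar>A - B\<bar> / 2" shows False
proof -
  have "\<bar>A - B\<bar> \<le> \<bar>C - A\<bar> + \<bar>C' - B\<bar>" using assms(3) by (simp add: abs_le_iff abs_if)
  then show False using assms(1,2,4) by simp
qed

lemma schwarz:
  fixes f :: "real \<times> real \<Rightarrow> real"
  assumes V: "open V" and f: "Ck_on 2 V f" and p: "p \<in> V"
  shows "pd2 (pd1 f) p = pd1 (pd2 f) p"
proof (rule ccontr)
  assume ne: "pd2 (pd1 f) p \<noteq> pd1 (pd2 f) p"
  define \<epsilon> where "\<epsilon> = \<bar>pd2 (pd1 f) p - pd1 (pd2 f) p\<bar> / 2"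
  have ep: "\<epsilon> > 0" using ne \<epsilon>_def by simp
  have c12: "continuous_on V (pd2 (pd1 f))" and c21: "continuous_on V (pd1 (pd2 f))"
    using f by (simp_all add: numeral_2_eq_2)
  obtain d1 where d1: "d1 > 0" "\<And>z. z \<in> V \<Longrightarrow> dist z p < d1 \<Longrightarrow> dist (pd2 (pd1 f) z) (pd2 (pd1 f) p) < \<epsilon>"
    using c12 p ep unfolding continuous_on_iff by blast
  obtain d2 where d2: "d2 > 0" "\<And>z. z \<in> V \<Longrightarrow> dist z p < d2 \<Longrightarrow> dist (pd1 (pd2 f) z) (pd1 (pd2 f) p) < \<epsilon>"
    using c21 p ep unfolding continuous_on_iff by blast
  obtain r where r: "r > 0" "ball p r \<subseteq> V" using V p open_contains_ball by blast
  define s where "s = min r (min d1 d2) / 3"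
  have s: "s > 0" "2 * s < r" "2 * s < d1" "2 * s < d2" using r d1 d2 s_def by auto
  obtain a b where ab: "p = (a, b)" by (cases p)
  have close: "dist (x, y) p \<le> 2 * s" if "a \<le> x" "x \<le> a + s" "b \<le> y" "y \<le> b + s" for x y
  proof -
    have "dist (x, y) p \<le> \<bar>x - a\<bar> + \<bar>y - b\<bar>" using dist_pair_le ab by simp
    also have "\<dots> \<le> 2 * s" using that s(1) by auto
    finally show ?thesis .
  qed
  have sq: "(x, y) \<in> V" if "a \<le> x" "x \<le> a + s" "b \<le> y" "y \<le> b + s" for x y
    using close[OF that] s r by (auto simp: dist_commute)
  obtain \<xi> \<eta> where A: "a \<le> \<xi>" "\<xi> \<le> a + s" "b \<le> \<eta>" "\<eta> \<le> b + s"
    and eA: "f (a + s, b + s) - f (a + s, b) - f (a, b + s) + f (a, b) = s * s * pd2 (pd1 f) (\<xi>, \<eta>)"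
    using mixed_mvt1[OF f s(1) sq] by blast
  obtain \<xi>' \<eta>' where B: "a \<le> \<xi>'" "\<xi>' \<le> a + s" "b \<le> \<eta>'" "\<eta>' \<le> b + s"
    and eB: "f (a + s, b + s) - f (a + s, b) - f (a, b + s) + f (a, b) = s * s * pd1 (pd2 f) (\<xi>', \<eta>')"
    using mixed_mvt2[OF f s(1) sq] by blast
  have eq: "pd2 (pd1 f) (\<xi>, \<eta>) = pd1 (pd2 f) (\<xi>', \<eta>')" using eA eB s(1) by simp
  have "dist (pd2 (pd1 f) (\<xi>, \<eta>)) (pd2 (pd1 f) p) < \<epsilon>"
    using d1(2)[OF sq[OF A] ] close[OF A] s by simp
  moreover have "dist (pd1 (pd2 f) (\<xi>', \<eta>')) (pd1 (pd2 f) p) < \<epsilon>"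
    using d2(2)[OF sq[OF B] ] close[OF B] s by simp
  ultimately show False using eq \<epsilon>_def abs_contra unfolding dist_real_def by blast
qed


lemma line_deriv:
  fixes w :: "real \<times> real \<Rightarrow> real"
  assumes V: "open V" and w: "Ck_on (Suc k) V w" and y: "z + \<tau> *\<^sub>R d \<in> V"
  shows "((\<lambda>t. w (z + t *\<^sub>R d)) has_real_derivative (fst d * pd1 w (z + \<tau> *\<^sub>R d) + snd d * pd2 w (z + \<tau> *\<^sub>R d))) (at \<tau>)"
proof -
  have fw: "(w has_derivative (\<lambda>h. fst h *\<^sub>R pd1 w (z + \<tau> *\<^sub>R d) + snd h *\<^sub>R pd2 w (z + \<tau> *\<^sub>R d))) (at (z + \<tau> *\<^sub>R d))"
    by (rule frechet[OF V w y])
  have ln: "((\<lambda>t. z + t *\<^sub>R d) has_derivative (\<lambda>h. h *\<^sub>R d)) (at \<tau>)"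
    by (auto intro!: derivative_eq_intros)
  have "((\<lambda>t. w (z + t *\<^sub>R d)) has_derivative (\<lambda>h. fst (h *\<^sub>R d) *\<^sub>R pd1 w (z + \<tau> *\<^sub>R d) + snd (h *\<^sub>R d) *\<^sub>R pd2 w (z + \<tau> *\<^sub>R d))) (at \<tau>)"
    using diff_chain_at[OF ln fw] by (simp add: o_def)
  moreover have "(\<lambda>h. fst (h *\<^sub>R d) *\<^sub>R pd1 w (z + \<tau> *\<^sub>R d) + snd (h *\<^sub>R d) *\<^sub>R pd2 w (z + \<tau> *\<^sub>R d))
      = (*) (fst d * pd1 w (z + \<tau> *\<^sub>R d) + snd d * pd2 w (z + \<tau> *\<^sub>R d))"
    by (auto simp: algebra_simps)
  ultimately show ?thesis unfolding has_field_derivative_def by simp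
qed

lemma max_first_order:
  fixes w :: "real \<times> real \<Rightarrow> real"
  assumes V: "open V" and w: "Ck_on (Suc k) V w" and z: "z \<in> V"
    and mx: "\<And>y. y \<in> V \<Longrightarrow> w y \<le> w z"
  shows "pd1 w z = 0" "pd2 w z = 0"
proof -
  obtain r where r: "r > 0" "ball z r \<subseteq> V" using V z open_contains_ball by blast
  have h1: "((\<lambda>s. w (s, snd z)) has_real_derivative pd1 w z) (at (fst z))"
    using Ck_H1[OF w z] unfolding H1_def rd_iff .
  have h2: "((\<lambda>s. w (fst z, s)) has_real_derivative pd2 w z) (at (snd z))"
    using Ck_H2[OF w z] unfolding H2_def rd_iff .
  show "pd1 w z = 0"
  proof (rule DERIV_local_max[OF h1 r(1)], intro allI impI)
    fix y assume "\<bar>fst z - y\<bar> < r"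
    then have "(y, snd z) \<in> ball z r" by (cases z) (simp add: dist_Pair_Pair dist_real_def abs_minus_commute)
    then show "w (y, snd z) \<le> w (fst z, snd z)" using mx r(2) by auto
  qed
  show "pd2 w z = 0"
  proof (rule DERIV_local_max[OF h2 r(1)], intro allI impI)
    fix y assume "\<bar>snd z - y\<bar> < r"
    then have "(fst z, y) \<in> ball z r" by (cases z) (simp add: dist_Pair_Pair dist_real_def abs_minus_commute)
    then show "w (fst z, y) \<le> w (fst z, snd z)" using mx r(2) by auto
  qed
qed

lemma max_second_order:
  fixes w :: "real \<times> real \<Rightarrow> real"
  assumes V: "open V" and w: "Ck_on 2 V w" and z: "z \<in> V"
    and mx: "\<And>y. y \<in> V \<Longrightarrow> w y \<le> w z"
  shows "fst d * fst d * pd1 (pd1 w) z + 2 * fst d * snd d * pd2 (pd1 w) z + snd d * snd d * pd2 (pd2 w) z \<le> 0"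
proof (rule ccontr)
  let ?Q = "fst d * fst d * pd1 (pd1 w) z + 2 * fst d * snd d * pd2 (pd1 w) z + snd d * snd d * pd2 (pd2 w) z"
  assume "\<not> ?Q \<le> 0"
  then have Qp: "?Q > 0" by simp
  have w2: "Ck_on (Suc 1) V w" using w by (simp add: numeral_2_eq_2)
  have k1: "Ck_on (Suc 0) V (pd1 w)" "Ck_on (Suc 0) V (pd2 w)" using w by (simp_all add: numeral_2_eq_2)
  have fo: "pd1 w z = 0" "pd2 w z = 0" using max_first_order[OF V w2 z mx] by auto
  define g where "g t = fst d * pd1 w (z + t *\<^sub>R d) + snd d * pd2 w (z + t *\<^sub>R d)" for t
  have z0: "z + 0 *\<^sub>R d \<in> V" using z by simp
  have g1: "((\<lambda>t. pd1 w (z + t *\<^sub>R d)) has_real_derivative (fst d * pd1 (pd1 w) z + snd d * pd2 (pd1 w) z)) (at 0)"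
    using line_deriv[OF V k1(1) z0] by simp
  have g2: "((\<lambda>t. pd2 w (z + t *\<^sub>R d)) has_real_derivative (fst d * pd1 (pd2 w) z + snd d * pd2 (pd2 w) z)) (at 0)"
    using line_deriv[OF V k1(2) z0] by simp
  have sw: "pd1 (pd2 w) z = pd2 (pd1 w) z" using schwarz[OF V w z] by simp
  have "(g has_real_derivative ?Q) (at 0)"
  proof -
    have "(g has_real_derivative (fst d * (fst d * pd1 (pd1 w) z + snd d * pd2 (pd1 w) z)
        + snd d * (fst d * pd1 (pd2 w) z + snd d * pd2 (pd2 w) z))) (at 0)"
      unfolding g_def by (intro DERIV_add DERIV_cmult g1 g2)
    then show ?thesis unfolding sw by (simp add: algebra_simps)
  qed
  then obtain \<delta> where \<delta>: "\<delta> > 0" "\<And>h. h > 0 \<Longrightarrow> h < \<delta> \<Longrightarrow> g 0 < g (0 + h)"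
    using DERIV_pos_inc_right[OF _ Qp] by blast
  have g0: "g 0 = 0" unfolding g_def using fo by simp
  obtain r where r: "r > 0" "ball z r \<subseteq> V" using V z open_contains_ball by blast
  define t where "t = min (\<delta> / 2) (r / (2 * (norm d + 1)))"
  have "2 * (norm d + 1) > 0" by (simp add: add_nonneg_pos)
  then have "r / (2 * (norm d + 1)) > 0" using r(1) by (rule divide_pos_pos[rotated])
  then have t: "t > 0" "t < \<delta>" using \<delta> r t_def by auto
  have inV: "z + \<tau> *\<^sub>R d \<in> V" if "0 \<le> \<tau>" "\<tau> \<le> t" for \<tau>
  proof -
    have "norm (\<tau> *\<^sub>R d) = \<tau> * norm d" using that by simp
    also have "\<dots> \<le> t * norm d" using that by (simp add: mult_right_mono)
    also have "\<dots> \<le> (r / (2 * (norm d + 1))) * norm d" unfolding t_def by (intro mult_right_mono) auto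
    also have "\<dots> < r"
    proof -
      have p2: "2 * (norm d + 1) > 0" by (simp add: add_nonneg_pos)
      have "norm d / (2 * (norm d + 1)) < 1" using p2 by (simp add: divide_less_eq)
      then have "r * (norm d / (2 * (norm d + 1))) < r * 1" using r(1) by (rule mult_strict_left_mono)
      then show ?thesis by simp
    qed
    finally have "z + \<tau> *\<^sub>R d \<in> ball z r" by (simp add: dist_norm)
    then show ?thesis using r by blast
  qed
  have "\<exists>\<xi>>0. \<xi> < t \<and> w (z + t *\<^sub>R d) - w (z + 0 *\<^sub>R d) = (t - 0) * g \<xi>"
  proof (rule MVT2[where f="\<lambda>s. w (z + s *\<^sub>R d)"])
    show "0 < t" using t by simp
    fix \<tau> assume "0 \<le> \<tau>" "\<tau> \<le> t"
    then show "((\<lambda>s. w (z + s *\<^sub>R d)) has_real_derivative g \<tau>) (at \<tau>)"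
      unfolding g_def by (rule line_deriv[OF V w2 inV])
  qed
  then obtain \<xi> where xi: "0 < \<xi>" "\<xi> < t" "w (z + t *\<^sub>R d) - w z = t * g \<xi>" by auto
  have "g \<xi> > 0" using \<delta>(2)[of \<xi>] xi t g0 by simp
  then have "t * g \<xi> > 0" using t by simp
  then have "w (z + t *\<^sub>R d) > w z" using xi(3) by linarith
  moreover have "w (z + t *\<^sub>R d) \<le> w z" using mx inV[of t] t by simp
  ultimately show False by simp
qed

lemma trace_neg:
  fixes E F G a b c :: real
  assumes E: "E > 0" and G: "G > 0" and D: "E * G - F^2 > 0"
    and Q: "\<And>d1 d2. d1 * d1 * a + 2 * d1 * d2 * b + d2 * d2 * c \<le> 0"
  shows "G * a - 2 * F * b + E * c \<le> 0"
proof -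
  have q1: "G * G * a + 2 * G * (- F) * b + (- F) * (- F) * c \<le> 0" by (rule Q)
  have c: "c \<le> 0" using Q[of 0 1] by simp
  have "G * (G * a - 2 * F * b + E * c) = (G * G * a + 2 * G * (- F) * b + (- F) * (- F) * c) + (E * G - F^2) * c"
    by (simp add: algebra_simps power2_eq_square)
  also have "\<dots> \<le> 0"
  proof -
    have "(E * G - F^2) * c \<le> 0" using D c by (simp add: mult_nonneg_nonpos)
    then show ?thesis using q1 by linarith
  qed
  finally have "G * (G * a - 2 * F * b + E * c) \<le> 0" .
  then show ?thesis using G by (simp add: mult_le_0_iff)
qed


lemma Ck_subset: "open U \<Longrightarrow> U \<subseteq> V \<Longrightarrow> Ck_on k V f \<Longrightarrow> Ck_on k U f"
proof (induction k arbitrary: f)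
  case 0 then show ?case using continuous_on_subset by auto
next
  case (Suc k)
  then show ?case using continuous_on_subset by auto
qed

lemma pd_lin:
  fixes f k :: "real \<times> real \<Rightarrow> real"
  assumes V: "open V" and f: "Ck_on 2 V f" and k: "Ck_on 2 V k" and z: "z \<in> V"
  shows "pd1 (\<lambda>z. f z + \<epsilon> * k z + c) z = pd1 f z + \<epsilon> * pd1 k z"
    "pd2 (\<lambda>z. f z + \<epsilon> * k z + c) z = pd2 f z + \<epsilon> * pd2 k z"
    "pd1 (pd1 (\<lambda>z. f z + \<epsilon> * k z + c)) z = pd1 (pd1 f) z + \<epsilon> * pd1 (pd1 k) z"
    "pd2 (pd1 (\<lambda>z. f z + \<epsilon> * k z + c)) z = pd2 (pd1 f) z + \<epsilon> * pd2 (pd1 k) z"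
    "pd2 (pd2 (\<lambda>z. f z + \<epsilon> * k z + c)) z = pd2 (pd2 f) z + \<epsilon> * pd2 (pd2 k) z"
proof -
  have f2: "Ck_on (Suc 1) V f" "Ck_on (Suc 1) V k" using f k by (simp_all add: numeral_2_eq_2)
  have k1: "Ck_on (Suc 0) V (pd1 f)" "Ck_on (Suc 0) V (pd2 f)" "Ck_on (Suc 0) V (pd1 k)" "Ck_on (Suc 0) V (pd2 k)"
    using f k by (simp_all add: numeral_2_eq_2)
  have g1: "H1 (\<lambda>z. f z + \<epsilon> * k z + c) y (pd1 f y + \<epsilon> * pd1 k y)" if "y \<in> V" for y
    using H1_add[OF H1_add[OF Ck_H1[OF f2(1) that] H1_mult[OF H1_const Ck_H1[OF f2(2) that]]] H1_const, of \<epsilon> c]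
    by simp
  have g2: "H2 (\<lambda>z. f z + \<epsilon> * k z + c) y (pd2 f y + \<epsilon> * pd2 k y)" if "y \<in> V" for y
    using H2_add[OF H2_add[OF Ck_H2[OF f2(1) that] H2_mult[OF H2_const Ck_H2[OF f2(2) that]]] H2_const, of \<epsilon> c]
    by simp
  have c1: "pd1 (\<lambda>z. f z + \<epsilon> * k z + c) y = pd1 f y + \<epsilon> * pd1 k y" if "y \<in> V" for y
    using g1[OF that] H1_pd1 by blast
  have c2: "pd2 (\<lambda>z. f z + \<epsilon> * k z + c) y = pd2 f y + \<epsilon> * pd2 k y" if "y \<in> V" for y
    using g2[OF that] H2_pd2 by blast
  show "pd1 (\<lambda>z. f z + \<epsilon> * k z + c) z = pd1 f z + \<epsilon> * pd1 k z" using c1 z .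
  show "pd2 (\<lambda>z. f z + \<epsilon> * k z + c) z = pd2 f z + \<epsilon> * pd2 k z" using c2 z .
  have e: "pd1 (\<lambda>z. pd1 f z + \<epsilon> * pd1 k z + 0) z = pd1 (pd1 f) z + \<epsilon> * pd1 (pd1 k) z"
    using H1_add[OF H1_add[OF Ck_H1[OF k1(1) z] H1_mult[OF H1_const Ck_H1[OF k1(3) z]]] H1_const, of \<epsilon> 0] H1_pd1
    by simp
  show "pd1 (pd1 (\<lambda>z. f z + \<epsilon> * k z + c)) z = pd1 (pd1 f) z + \<epsilon> * pd1 (pd1 k) z"
    using pd1_cong[OF V z c1] e by simp
  have e: "pd2 (\<lambda>z. pd1 f z + \<epsilon> * pd1 k z + 0) z = pd2 (pd1 f) z + \<epsilon> * pd2 (pd1 k) z"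
    using H2_add[OF H2_add[OF Ck_H2[OF k1(1) z] H2_mult[OF H2_const Ck_H2[OF k1(3) z]]] H2_const, of \<epsilon> 0] H2_pd2
    by simp
  show "pd2 (pd1 (\<lambda>z. f z + \<epsilon> * k z + c)) z = pd2 (pd1 f) z + \<epsilon> * pd2 (pd1 k) z"
    using pd2_cong[OF V z c1] e by simp
  have e: "pd2 (\<lambda>z. pd2 f z + \<epsilon> * pd2 k z + 0) z = pd2 (pd2 f) z + \<epsilon> * pd2 (pd2 k) z"
    using H2_add[OF H2_add[OF Ck_H2[OF k1(2) z] H2_mult[OF H2_const Ck_H2[OF k1(4) z]]] H2_const, of \<epsilon> 0] H2_pd2
    by simp
  show "pd2 (pd2 (\<lambda>z. f z + \<epsilon> * k z + c)) z = pd2 (pd2 f) z + \<epsilon> * pd2 (pd2 k) z"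
    using pd2_cong[OF V z c2] e by simp
qed

lemma Ck_lin: "open V \<Longrightarrow> Ck_on j V (f::real\<times>real\<Rightarrow>real) \<Longrightarrow> Ck_on j V k \<Longrightarrow> Ck_on j V (\<lambda>z. f z + \<epsilon> * k z + c)"
  by (intro Ck_add Ck_mult Ck_const) auto

definition Lab :: "(real\<times>real \<Rightarrow> real) \<Rightarrow> (real\<times>real \<Rightarrow> real) \<Rightarrow> (real\<times>real \<Rightarrow> real) \<Rightarrow> (real\<times>real \<Rightarrow> real) \<Rightarrow> (real\<times>real \<Rightarrow> real)
   \<Rightarrow> (real\<times>real \<Rightarrow> real) \<Rightarrow> real\<times>real \<Rightarrow> real" where
  "Lab E F G P1 P2 g z = (G z * pd1 (pd1 g) z - 2 * F z * pd2 (pd1 g) z + E z * pd2 (pd2 g) z) / (E z * G z - (F z)^2)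
     + P1 z * pd1 g z + P2 z * pd2 g z"

lemma Lab_lin:
  assumes V: "open V" and f: "Ck_on 2 V f" and k: "Ck_on 2 V k" and z: "z \<in> V"
  shows "Lab E F G P1 P2 (\<lambda>z. f z + \<epsilon> * k z + c) z = Lab E F G P1 P2 f z + \<epsilon> * Lab E F G P1 P2 k z"
  unfolding Lab_def pd_lin[OF V f k z] by (simp add: algebra_simps add_divide_distrib diff_divide_distrib)

lemma quad_lower:
  fixes E F G a b :: real
  assumes E: "E > 0" and G: "G > 0" and D: "E * G - F^2 > 0"
  shows "(G * a * a - 2 * F * a * b + E * b * b) / (E * G - F^2) \<ge> (a * a + b * b) / (G + E)"
proof -
  have "(G + E) * (G * a * a - 2 * F * a * b + E * b * b) = (G * a - F * b)^2 + (E * b - F * a)^2 + (E * G - F^2) * (a * a + b * b)"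
    by (simp add: algebra_simps power2_eq_square)
  also have "\<dots> \<ge> (E * G - F^2) * (a * a + b * b)" by simp
  finally have "(E * G - F^2) * (a * a + b * b) \<le> (G + E) * (G * a * a - 2 * F * a * b + E * b * b)" .
  then show ?thesis using D E G by (simp add: divide_simps mult.commute)
qed


definition sfun :: "real \<Rightarrow> real \<times> real \<Rightarrow> real \<times> real \<Rightarrow> real" where
  "sfun \<alpha> y z = - \<alpha> * ((fst z - fst y) * (fst z - fst y) + (snd z - snd y) * (snd z - snd y))"

lemma Ck_sfun: "Ck_on j UNIV (sfun \<alpha> y)"
proof -
  have "Ck_on j UNIV (\<lambda>z. (\<lambda>z. - \<alpha>) z * ((fst z + (\<lambda>z. - fst y) z) * (fst z + (\<lambda>z. - fst y) z)
      + (snd z + (\<lambda>z. - snd y) z) * (snd z + (\<lambda>z. - snd y) z)))"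
    by (intro Ck_mult Ck_add Ck_const Ck_fst Ck_snd) auto
  then show ?thesis by (rule Ck_cong[rotated 2]) (auto simp: sfun_def)
qed

lemma H_sfun:
  "H1 (sfun \<alpha> y) z (- 2 * \<alpha> * (fst z - fst y))" "H2 (sfun \<alpha> y) z (- 2 * \<alpha> * (snd z - snd y))"
proof -
  have a: "H1 (\<lambda>z. fst z + (- fst y)) z (1 + 0)" by (intro H1_add H1_fst H1_const)
  have b: "H1 (\<lambda>z. snd z + (- snd y)) z (0 + 0)" by (intro H1_add H1_snd H1_const)
  have "H1 (\<lambda>z. (\<lambda>z. - \<alpha>) z * ((fst z + (- fst y)) * (fst z + (- fst y)) + (snd z + (- snd y)) * (snd z + (- snd y)))) z
     (0 * ((fst z + (- fst y)) * (fst z + (- fst y)) + (snd z + (- snd y)) * (snd z + (- snd y)))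
      + (- \<alpha>) * (((1 + 0) * (fst z + (- fst y)) + (fst z + (- fst y)) * (1 + 0))
           + ((0 + 0) * (snd z + (- snd y)) + (snd z + (- snd y)) * (0 + 0))))"
    by (intro H1_mult H1_add H1_const a b)
  then show "H1 (sfun \<alpha> y) z (- 2 * \<alpha> * (fst z - fst y))" unfolding sfun_def by (simp add: algebra_simps)
  have a: "H2 (\<lambda>z. fst z + (- fst y)) z (0 + 0)" by (intro H2_add H2_fst H2_const)
  have b: "H2 (\<lambda>z. snd z + (- snd y)) z (1 + 0)" by (intro H2_add H2_snd H2_const)
  have "H2 (\<lambda>z. (\<lambda>z. - \<alpha>) z * ((fst z + (- fst y)) * (fst z + (- fst y)) + (snd z + (- snd y)) * (snd z + (- snd y)))) z
     (0 * ((fst z + (- fst y)) * (fst z + (- fst y)) + (snd z + (- snd y)) * (snd z + (- snd y)))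
      + (- \<alpha>) * (((0 + 0) * (fst z + (- fst y)) + (fst z + (- fst y)) * (0 + 0))
           + ((1 + 0) * (snd z + (- snd y)) + (snd z + (- snd y)) * (1 + 0))))"
    by (intro H2_mult H2_add H2_const a b)
  then show "H2 (sfun \<alpha> y) z (- 2 * \<alpha> * (snd z - snd y))" unfolding sfun_def by (simp add: algebra_simps)
qed

lemma pd_sfun:
  "pd1 (sfun \<alpha> y) = (\<lambda>z. - 2 * \<alpha> * (fst z - fst y))" "pd2 (sfun \<alpha> y) = (\<lambda>z. - 2 * \<alpha> * (snd z - snd y))"
  using H_sfun H1_pd1 H2_pd2 by blast+

lemma pd_sfun2:
  "pd1 (pd1 (sfun \<alpha> y)) z = - 2 * \<alpha>" "pd2 (pd1 (sfun \<alpha> y)) z = 0" "pd2 (pd2 (sfun \<alpha> y)) z = - 2 * \<alpha>"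
proof -
  have "H1 (\<lambda>z. (\<lambda>z. - 2 * \<alpha>) z * (fst z + (\<lambda>z. - fst y) z)) z (0 * (fst z + (- fst y)) + (- 2 * \<alpha>) * (1 + 0))"
    by (intro H1_mult H1_add H1_const H1_fst)
  then have "H1 (\<lambda>z. - 2 * \<alpha> * (fst z - fst y)) z (- 2 * \<alpha>)" by simp
  then show "pd1 (pd1 (sfun \<alpha> y)) z = - 2 * \<alpha>" unfolding pd_sfun by (rule H1_pd1)
  have "H2 (\<lambda>z. (\<lambda>z. - 2 * \<alpha>) z * (fst z + (\<lambda>z. - fst y) z)) z (0 * (fst z + (- fst y)) + (- 2 * \<alpha>) * (0 + 0))"
    by (intro H2_mult H2_add H2_const H2_fst)
  then have "H2 (\<lambda>z. - 2 * \<alpha> * (fst z - fst y)) z 0" by simp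
  then show "pd2 (pd1 (sfun \<alpha> y)) z = 0" unfolding pd_sfun by (rule H2_pd2)
  have "H2 (\<lambda>z. (\<lambda>z. - 2 * \<alpha>) z * (snd z + (\<lambda>z. - snd y) z)) z (0 * (snd z + (- snd y)) + (- 2 * \<alpha>) * (1 + 0))"
    by (intro H2_mult H2_add H2_const H2_snd)
  then have "H2 (\<lambda>z. - 2 * \<alpha> * (snd z - snd y)) z (- 2 * \<alpha>)" by simp
  then show "pd2 (pd2 (sfun \<alpha> y)) z = - 2 * \<alpha>" unfolding pd_sfun by (rule H2_pd2)
qed

definition kfun :: "real \<Rightarrow> real \<times> real \<Rightarrow> real \<times> real \<Rightarrow> real" where
  "kfun \<alpha> y z = exp (sfun \<alpha> y z)"

lemma Ck_kfun: "Ck_on j U (kfun \<alpha> y)" if "open U"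
  unfolding kfun_def using Ck_exp[OF _ Ck_sfun] Ck_subset[OF that] by blast

lemma pd_kfun:
  "pd1 (kfun \<alpha> y) z = kfun \<alpha> y z * (- 2 * \<alpha> * (fst z - fst y))"
  "pd2 (kfun \<alpha> y) z = kfun \<alpha> y z * (- 2 * \<alpha> * (snd z - snd y))"
  "pd1 (pd1 (kfun \<alpha> y)) z = kfun \<alpha> y z * (4 * \<alpha>^2 * (fst z - fst y)^2 - 2 * \<alpha>)"
  "pd2 (pd1 (kfun \<alpha> y)) z = kfun \<alpha> y z * (4 * \<alpha>^2 * (fst z - fst y) * (snd z - snd y))"
  "pd2 (pd2 (kfun \<alpha> y)) z = kfun \<alpha> y z * (4 * \<alpha>^2 * (snd z - snd y)^2 - 2 * \<alpha>)"
proof -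
  have k: "kfun \<alpha> y = (\<lambda>z. exp (sfun \<alpha> y z))" by (simp add: kfun_def fun_eq_iff)
  note pe = pd_exp[OF open_UNIV Ck_sfun UNIV_I, of \<alpha> y z, folded k]
  show "pd1 (kfun \<alpha> y) z = kfun \<alpha> y z * (- 2 * \<alpha> * (fst z - fst y))"
    using pe(1) by (simp add: pd_sfun kfun_def)
  show "pd2 (kfun \<alpha> y) z = kfun \<alpha> y z * (- 2 * \<alpha> * (snd z - snd y))"
    using pe(2) by (simp add: pd_sfun kfun_def)
  show "pd1 (pd1 (kfun \<alpha> y)) z = kfun \<alpha> y z * (4 * \<alpha>^2 * (fst z - fst y)^2 - 2 * \<alpha>)"
    using pe(3) unfolding pd_sfun2 by (simp add: pd_sfun kfun_def algebra_simps power2_eq_square)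
  show "pd2 (pd1 (kfun \<alpha> y)) z = kfun \<alpha> y z * (4 * \<alpha>^2 * (fst z - fst y) * (snd z - snd y))"
    using pe(4) unfolding pd_sfun2 by (simp add: pd_sfun kfun_def algebra_simps power2_eq_square)
  show "pd2 (pd2 (kfun \<alpha> y)) z = kfun \<alpha> y z * (4 * \<alpha>^2 * (snd z - snd y)^2 - 2 * \<alpha>)"
    using pe(5) unfolding pd_sfun2 by (simp add: pd_sfun kfun_def algebra_simps power2_eq_square)
qed

lemma bracket_pos:
  fixes E F G P1 P2 a b R M C \<alpha> :: real
  assumes E: "E > 0" and G: "G > 0" and D: "E * G - F^2 > 0" and R: "R > 0"
    and M: "M \<ge> G + E" and C: "C \<ge> (G + E) / (E * G - F^2) + (\<bar>P1\<bar> + \<bar>P2\<bar>) * R"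
    and ab: "a * a + b * b \<ge> R * R / 4" "\<bar>a\<bar> \<le> R" "\<bar>b\<bar> \<le> R"
    and al: "\<alpha> > 0" "\<alpha> * R * R > 2 * C * M"
  shows "(G * (4 * \<alpha>^2 * a^2 - 2 * \<alpha>) - 2 * F * (4 * \<alpha>^2 * a * b) + E * (4 * \<alpha>^2 * b^2 - 2 * \<alpha>)) / (E * G - F^2)
      - 2 * \<alpha> * (P1 * a + P2 * b) > 0"
proof -
  define N where "N = (G * a * a - 2 * F * a * b + E * b * b) / (E * G - F^2)"
  have Mp: "M > 0" using M E G by simp
  have eq: "(G * (4 * \<alpha>^2 * a^2 - 2 * \<alpha>) - 2 * F * (4 * \<alpha>^2 * a * b) + E * (4 * \<alpha>^2 * b^2 - 2 * \<alpha>)) / (E * G - F^2)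
      = 4 * \<alpha>^2 * N - 2 * \<alpha> * ((G + E) / (E * G - F^2))"
  proof -
    have num: "G * (4 * \<alpha>^2 * a^2 - 2 * \<alpha>) - 2 * F * (4 * \<alpha>^2 * a * b) + E * (4 * \<alpha>^2 * b^2 - 2 * \<alpha>)
       = 4 * \<alpha>^2 * (G * a * a - 2 * F * a * b + E * b * b) - 2 * \<alpha> * (G + E)"
      by (simp add: algebra_simps power2_eq_square)
    show ?thesis unfolding num N_def by (simp add: diff_divide_distrib)
  qed
  have N1: "N \<ge> (a * a + b * b) / (G + E)" unfolding N_def by (rule quad_lower[OF E G D])
  have N2: "(a * a + b * b) / (G + E) \<ge> (R * R / 4) / M"
  proof (rule frac_le)
    show "0 \<le> a * a + b * b" by simp
    show "R * R / 4 \<le> a * a + b * b" using ab(1) .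
    show "0 < G + E" using E G by simp
    show "G + E \<le> M" using M .
  qed
  have NN: "N \<ge> (R * R / 4) / M" using N1 N2 by linarith
  have Pb: "P1 * a + P2 * b \<le> (\<bar>P1\<bar> + \<bar>P2\<bar>) * R"
  proof -
    have "P1 * a \<le> \<bar>P1\<bar> * \<bar>a\<bar>" using abs_ge_self[of "P1 * a"] abs_mult[of P1 a] by simp
    also have "\<dots> \<le> \<bar>P1\<bar> * R" by (rule mult_left_mono[OF ab(2) abs_ge_zero])
    finally have 1: "P1 * a \<le> \<bar>P1\<bar> * R" .
    have "P2 * b \<le> \<bar>P2\<bar> * \<bar>b\<bar>" using abs_ge_self[of "P2 * b"] abs_mult[of P2 b] by simp
    also have "\<dots> \<le> \<bar>P2\<bar> * R" by (rule mult_left_mono[OF ab(3) abs_ge_zero])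
    finally have 2: "P2 * b \<le> \<bar>P2\<bar> * R" .
    from 1 2 show ?thesis by (simp add: algebra_simps)
  qed
  have t1: "4 * \<alpha>^2 * N \<ge> 4 * \<alpha>^2 * ((R * R / 4) / M)"
    by (rule mult_left_mono[OF NN]) simp
  have t2: "2 * \<alpha> * ((G + E) / (E * G - F^2)) + 2 * \<alpha> * (P1 * a + P2 * b) \<le> 2 * \<alpha> * C"
  proof -
    have "(G + E) / (E * G - F^2) + (P1 * a + P2 * b) \<le> C" using C Pb by linarith
    then have "2 * \<alpha> * ((G + E) / (E * G - F^2) + (P1 * a + P2 * b)) \<le> 2 * \<alpha> * C" using al by (simp add: mult_left_mono)
    then show ?thesis by (simp add: algebra_simps)
  qed
  have t3: "4 * \<alpha>^2 * ((R * R / 4) / M) - 2 * \<alpha> * C > 0"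
  proof -
    have "\<alpha> * R * R / M > 2 * C" using al(2) Mp by (simp add: divide_simps mult.commute)
    then have "\<alpha> * (\<alpha> * R * R / M) > \<alpha> * (2 * C)" using al(1) by (rule mult_strict_left_mono)
    moreover have "4 * \<alpha>^2 * ((R * R / 4) / M) = \<alpha> * (\<alpha> * R * R / M)" by (simp add: power2_eq_square)
    ultimately show ?thesis by linarith
  qed
  show ?thesis unfolding eq using t1 t2 t3 by linarith
qed


lemma Lab_kfun:
  "Lab E F G P1 P2 (kfun \<alpha> y) z = kfun \<alpha> y z *
     ((G z * (4 * \<alpha>^2 * (fst z - fst y)^2 - 2 * \<alpha>) - 2 * F z * (4 * \<alpha>^2 * (fst z - fst y) * (snd z - snd y))
        + E z * (4 * \<alpha>^2 * (snd z - snd y)^2 - 2 * \<alpha>)) / (E z * G z - (F z)^2)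
      - 2 * \<alpha> * (P1 z * (fst z - fst y) + P2 z * (snd z - snd y)))"
  unfolding Lab_def pd_kfun by (simp add: algebra_simps divide_inverse)

lemma dist_sq: "(dist (z::real\<times>real) y)^2 = (fst z - fst y)^2 + (snd z - snd y)^2"
  by (cases z, cases y) (simp add: dist_Pair_Pair dist_real_def)

lemma kfun_dist: "kfun \<alpha> y z = exp (- \<alpha> * (dist z y)^2)"
  unfolding kfun_def sfun_def dist_sq by (simp add: power2_eq_square)

lemma abs_le_dist: "\<bar>fst z - fst y\<bar> \<le> dist (z::real\<times>real) y" "\<bar>snd z - snd y\<bar> \<le> dist z y"
proof -
  have "(fst z - fst y)^2 \<le> (dist z y)^2" "(snd z - snd y)^2 \<le> (dist z y)^2" unfolding dist_sq by simp_all
  then show "\<bar>fst z - fst y\<bar> \<le> dist z y" "\<bar>snd z - snd y\<bar> \<le> dist z y"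
    using abs_le_square_iff by (metis abs_of_nonneg zero_le_dist)+
qed

lemma hopfA:
  fixes f E F G P1 P2 :: "real \<times> real \<Rightarrow> real"
  assumes V: "open V"
    and cE: "continuous_on V E" and cF: "continuous_on V F" and cG: "continuous_on V G"
    and cP1: "continuous_on V P1" and cP2: "continuous_on V P2"
    and pos: "\<And>z. z \<in> V \<Longrightarrow> E z > 0 \<and> G z > 0 \<and> E z * G z - (F z)^2 > 0"
    and f: "Ck_on 2 V f" and Lf: "\<And>z. z \<in> V \<Longrightarrow> Lab E F G P1 P2 f z \<ge> 0"
    and le: "\<And>z. z \<in> V \<Longrightarrow> f z \<le> c"
    and R: "R > 0" and cb: "cball y R \<subseteq> V" and lt: "\<And>z. z \<in> ball y R \<Longrightarrow> f z < c"
    and q: "dist q y = R" "f q = c"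
  shows False
proof -
  have qV: "q \<in> V" using q(1) cb by (auto simp: dist_commute)
  have f2: "Ck_on (Suc 1) V f" using f by (simp add: numeral_2_eq_2)
  have fc: "continuous_on V f" using f Ck_cont by blast
  define Kc where "Kc = cball y R"
  have Kc: "compact Kc" "Kc \<noteq> {}" "Kc \<subseteq> V" using cb R Kc_def by auto
  define S where "S z = G z + E z" for z
  define T where "T z = (G z + E z) / (E z * G z - (F z)^2) + (\<bar>P1 z\<bar> + \<bar>P2 z\<bar>) * R" for z
  have cS: "continuous_on Kc S" unfolding S_def using cE cG Kc(3)
    by (intro continuous_intros) (auto intro: continuous_on_subset)
  have cT: "continuous_on Kc T" unfolding T_def using cE cF cG cP1 cP2 Kc(3) pos
    by (intro continuous_intros) (auto intro: continuous_on_subset simp: less_le)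
  obtain zM where zM: "zM \<in> Kc" "\<And>z. z \<in> Kc \<Longrightarrow> S z \<le> S zM"
    using continuous_attains_sup[OF Kc(1,2) cS] by blast
  obtain zC where zC: "zC \<in> Kc" "\<And>z. z \<in> Kc \<Longrightarrow> T z \<le> T zC"
    using continuous_attains_sup[OF Kc(1,2) cT] by blast
  define M where "M = S zM"
  define C where "C = T zC"
  have Mp: "M > 0" using pos[of zM] zM Kc(3) M_def S_def by auto
  define \<alpha> where "\<alpha> = 2 * \<bar>C\<bar> * M / (R * R) + 1"
  have alp: "\<alpha> > 0" unfolding \<alpha>_def using Mp R by (simp add: add_nonneg_pos)
  have alR: "\<alpha> * R * R > 2 * C * M"
  proof -
    have "\<alpha> * R * R = 2 * \<bar>C\<bar> * M + R * R" unfolding \<alpha>_def using R by (simp add: field_simps)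
    moreover have "2 * C * M \<le> 2 * \<bar>C\<bar> * M" using Mp by (simp add: mult_right_mono)
    moreover have "R * R > 0" using R by simp
    ultimately show ?thesis by linarith
  qed
  
  have Lk: "Lab E F G P1 P2 (kfun \<alpha> y) z > 0" if z: "z \<in> V" "R / 2 \<le> dist z y" "dist z y \<le> R" for z
  proof -
    have zK: "z \<in> Kc" using z Kc_def by (simp add: dist_commute)
    have p: "E z > 0" "G z > 0" "E z * G z - (F z)^2 > 0" using pos z(1) by auto
    have br: "(G z * (4 * \<alpha>^2 * (fst z - fst y)^2 - 2 * \<alpha>) - 2 * F z * (4 * \<alpha>^2 * (fst z - fst y) * (snd z - snd y))
        + E z * (4 * \<alpha>^2 * (snd z - snd y)^2 - 2 * \<alpha>)) / (E z * G z - (F z)^2)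
      - 2 * \<alpha> * (P1 z * (fst z - fst y) + P2 z * (snd z - snd y)) > 0"
    proof (rule bracket_pos[OF p R _ _ _ _ _ alp alR])
      show "M \<ge> G z + E z" using zM(2)[OF zK] M_def S_def by simp
      show "C \<ge> (G z + E z) / (E z * G z - (F z)^2) + (\<bar>P1 z\<bar> + \<bar>P2 z\<bar>) * R" using zC(2)[OF zK] C_def T_def by simp
      have "(R / 2)^2 \<le> (dist z y)^2" using z(2) R by (intro power_mono) auto
      then show "(fst z - fst y) * (fst z - fst y) + (snd z - snd y) * (snd z - snd y) \<ge> R * R / 4"
        unfolding dist_sq by (simp add: power2_eq_square)
      show "\<bar>fst z - fst y\<bar> \<le> R" using abs_le_dist(1)[of z y] z(3) by linarith
      show "\<bar>snd z - snd y\<bar> \<le> R" using abs_le_dist(2)[of z y] z(3) by linarith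
    qed
    have "kfun \<alpha> y z > 0" unfolding kfun_def by simp
    then show ?thesis unfolding Lab_kfun using br by simp
  qed
  
  define Ci where "Ci = sphere y (R / 2)"
  have Ci: "compact Ci" "Ci \<noteq> {}" "Ci \<subseteq> ball y R" using R Ci_def
    by (auto intro!: exI[of _ "y + (R / 2, 0)"] simp: dist_norm)
  have "Ci \<subseteq> V" using Ci(3) cb ball_subset_cball by blast
  then have cfi: "continuous_on Ci f" using fc continuous_on_subset by blast
  obtain zi where zi: "zi \<in> Ci" "\<And>z. z \<in> Ci \<Longrightarrow> f z \<le> f zi"
    using continuous_attains_sup[OF Ci(1,2) cfi] by blast
  define \<delta> where "\<delta> = c - f zi"
  have "zi \<in> ball y R" using zi(1) Ci(3) by blast
  then have dp: "\<delta> > 0" using lt[of zi] \<delta>_def by simp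
  define \<epsilon> where "\<epsilon> = \<delta> / 2"
  define e0 where "e0 = exp (- \<alpha> * R^2)"
  define w where "w = (\<lambda>z. f z + \<epsilon> * kfun \<alpha> y z + (- \<epsilon> * e0))"
  have wC: "Ck_on 2 V w" unfolding w_def by (rule Ck_lin[OF V f Ck_kfun[OF V]])
  have wq: "w q = c" unfolding w_def kfun_dist e0_def using q by simp
  have k1: "kfun \<alpha> y z \<le> 1" for z unfolding kfun_dist using alp by simp
  have e0p: "e0 > 0" unfolding e0_def by simp
  
  define K where "K = cball y R - ball y (R / 2)"
  have K: "compact K" "K \<subseteq> V" "q \<in> K" using cb q R unfolding K_def
    by (auto intro: compact_diff simp: dist_commute)
  have cw: "continuous_on K w" using wC K(2) Ck_cont by (blast intro: continuous_on_subset)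
  obtain zm where zm: "zm \<in> K" "\<And>z. z \<in> K \<Longrightarrow> w z \<le> w zm"
    using continuous_attains_sup[OF K(1) _ cw] K(3) by blast
  have wzm: "w zm \<ge> c" using zm(2)[OF K(3)] wq by simp
  have wle: "w zm \<le> c"
  proof -
    have dz: "R / 2 \<le> dist zm y" "dist zm y \<le> R" using zm(1) unfolding K_def by (auto simp: dist_commute)
    consider "dist zm y = R / 2" | "R / 2 < dist zm y \<and> dist zm y < R" | "dist zm y = R" using dz by linarith
    then show ?thesis
    proof cases
      case 1
      then have "zm \<in> Ci" unfolding Ci_def by (simp add: dist_commute)
      then have "f zm \<le> f zi" by (rule zi(2))
      then have "f zm \<le> c - \<delta>" using \<delta>_def by simp
      moreover have "\<epsilon> * kfun \<alpha> y zm \<le> \<epsilon>" using k1[of zm] dp \<epsilon>_def by simp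
      moreover have "- \<epsilon> * e0 < 0" using e0p dp \<epsilon>_def by simp
      ultimately show ?thesis unfolding w_def using \<epsilon>_def dp by linarith
    next
      case 2
      define U where "U = ball y R - cball y (R / 2)"
      have U: "open U" "zm \<in> U" "U \<subseteq> K" "U \<subseteq> V" using 2 cb unfolding U_def K_def
        by (auto simp: dist_commute)
      have wU: "Ck_on 2 U w" using Ck_subset[OF U(1) U(4) wC] .
      have mxU: "\<And>z. z \<in> U \<Longrightarrow> w z \<le> w zm" using zm(2) U(3) by blast
      have wU1: "Ck_on (Suc 1) U w" using wU by (simp add: numeral_2_eq_2)
      have fo: "pd1 w zm = 0" "pd2 w zm = 0"
        using max_first_order[OF U(1) wU1 U(2) mxU] by simp_all
      have so: "d1 * d1 * pd1 (pd1 w) zm + 2 * d1 * d2 * pd2 (pd1 w) zm + d2 * d2 * pd2 (pd2 w) zm \<le> 0" for d1 d2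
        using max_second_order[OF U(1) wU U(2) mxU, of "(d1, d2)"] by simp
      have zV: "zm \<in> V" using U by blast
      have p: "E zm > 0" "G zm > 0" "E zm * G zm - (F zm)^2 > 0" using pos zV by auto
      have "G zm * pd1 (pd1 w) zm - 2 * F zm * pd2 (pd1 w) zm + E zm * pd2 (pd2 w) zm \<le> 0"
        by (rule trace_neg[OF p so])
      then have "Lab E F G P1 P2 w zm \<le> 0" unfolding Lab_def fo using p(3)
        by (simp add: divide_nonpos_pos)
      moreover have "Lab E F G P1 P2 w zm > 0"
      proof -
        have "Lab E F G P1 P2 w zm = Lab E F G P1 P2 f zm + \<epsilon> * Lab E F G P1 P2 (kfun \<alpha> y) zm"
          unfolding w_def by (rule Lab_lin[OF V f Ck_kfun[OF V] zV])
        moreover have "Lab E F G P1 P2 (kfun \<alpha> y) zm > 0" using Lk[OF zV] 2 by simp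
        moreover have "\<epsilon> > 0" using dp \<epsilon>_def by simp
        moreover have "Lab E F G P1 P2 f zm \<ge> 0" using Lf zV by simp
        ultimately show ?thesis by (simp add: add_nonneg_pos)
      qed
      ultimately show ?thesis by simp
    next
      case 3
      then have "kfun \<alpha> y zm = e0" unfolding kfun_dist e0_def by simp
      then show ?thesis unfolding w_def using le[of zm] zm(1) K(2) by auto
    qed
  qed
  have wK: "\<And>z. z \<in> K \<Longrightarrow> w z \<le> c" using zm(2) wle by fastforce
  
  define d where "d = y - q"
  have nd: "fst d * fst d + snd d * snd d = R^2"
    using dist_sq[of y q] q(1) unfolding d_def by (simp add: dist_commute power2_eq_square)
  have fq: "pd1 f q = 0" "pd2 f q = 0" using max_first_order[OF V f2 qV] le q(2) by auto
  have kq: "kfun \<alpha> y q = e0" unfolding kfun_dist e0_def using q(1) by simp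
  have w1: "pd1 w q = \<epsilon> * (e0 * (2 * \<alpha> * fst d))" "pd2 w q = \<epsilon> * (e0 * (2 * \<alpha> * snd d))"
    unfolding w_def pd_lin[OF V f Ck_kfun[OF V] qV] fq pd_kfun kq d_def by (simp_all add: algebra_simps)
  define g where "g t = w (q + t *\<^sub>R d)" for t
  have q0: "q + 0 *\<^sub>R d \<in> V" using qV by simp
  have gd: "(g has_real_derivative (fst d * pd1 w q + snd d * pd2 w q)) (at 0)"
  proof -
    have wC1: "Ck_on (Suc 1) V w" using wC by (simp add: numeral_2_eq_2)
    show ?thesis unfolding g_def using line_deriv[OF V wC1 q0] by simp
  qed
  have pos_der: "fst d * pd1 w q + snd d * pd2 w q > 0"
  proof -
    have "fst d * pd1 w q + snd d * pd2 w q = \<epsilon> * e0 * 2 * \<alpha> * (fst d * fst d + snd d * snd d)"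
      unfolding w1 by (simp add: algebra_simps)
    also have "\<dots> > 0" unfolding nd using dp \<epsilon>_def e0p alp R by simp
    finally show ?thesis .
  qed
  obtain h0 where h0: "h0 > 0" "\<And>h. h > 0 \<Longrightarrow> h < h0 \<Longrightarrow> g 0 < g (0 + h)"
    using DERIV_pos_inc_right[OF gd pos_der] by blast
  define h where "h = min (h0 / 2) (1 / 2)"
  have h: "h > 0" "h < h0" "h \<le> 1 / 2" using h0 h_def by auto
  have "g 0 < g h" using h0(2)[OF h(1,2)] by simp
  moreover have "g 0 = c" unfolding g_def using wq by simp
  moreover have "q + h *\<^sub>R d \<in> K"
  proof -
    have "y - (q + h *\<^sub>R d) = (1 - h) *\<^sub>R (y - q)" unfolding d_def by (simp add: algebra_simps)
    moreover have "norm (y - q) = R" using q(1) by (simp add: dist_norm norm_minus_commute)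
    ultimately have "dist (q + h *\<^sub>R d) y = (1 - h) * R" using h
      by (simp add: dist_norm norm_minus_commute[of "q + h *\<^sub>R d"])
    then have dd: "dist y (q + h *\<^sub>R d) = R - R * h" by (simp add: dist_commute algebra_simps)
    have "R * h \<le> R * (1 / 2)" using h(3) R by (intro mult_left_mono) auto
    moreover have "R * h \<ge> 0" using h R by simp
    ultimately show ?thesis unfolding K_def using dd by simp
  qed
  then have "g h \<le> c" unfolding g_def using wK by blast
  ultimately show False by simp
qed


lemma local_smp:
  fixes f E F G P1 P2 :: "real \<times> real \<Rightarrow> real"
  assumes V: "open V"
    and cE: "continuous_on V E" and cF: "continuous_on V F" and cG: "continuous_on V G"
    and cP1: "continuous_on V P1" and cP2: "continuous_on V P2"
    and pos: "\<And>z. z \<in> V \<Longrightarrow> E z > 0 \<and> G z > 0 \<and> E z * G z - (F z)^2 > 0"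
    and f: "Ck_on 2 V f" and Lf: "\<And>z. z \<in> V \<Longrightarrow> Lab E F G P1 P2 f z \<ge> 0"
    and le: "\<And>z. z \<in> V \<Longrightarrow> f z \<le> c"
    and q0: "q0 \<in> V" "f q0 = c"
  shows "\<exists>r>0. \<forall>z\<in>ball q0 r. f z = c"
proof -
  obtain r0 where r0: "r0 > 0" "ball q0 r0 \<subseteq> V" using V q0(1) open_contains_ball by blast
  have fc: "continuous_on V f" using f Ck_cont by blast
  define r where "r = r0 / 3"
  have "\<forall>z\<in>ball q0 r. f z = c"
  proof (rule ccontr)
    assume "\<not> (\<forall>z\<in>ball q0 r. f z = c)"
    then obtain y where y: "y \<in> ball q0 r" "f y \<noteq> c" by blast
    have yV: "y \<in> V" using y(1) r0 r_def by auto
    have fy: "f y < c" using le[OF yV] y(2) by simp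
    define \<rho> where "\<rho> = dist y q0"
    have rho: "\<rho> < r" using y(1) \<rho>_def by (simp add: dist_commute)
    have cbV: "cball y \<rho> \<subseteq> V"
    proof
      fix z assume "z \<in> cball y \<rho>"
      then have "dist y z \<le> \<rho>" by simp
      then have "dist q0 z \<le> dist q0 y + dist y z" using dist_triangle by blast
      also have "\<dots> < r0" using \<open>dist y z \<le> \<rho>\<close> rho r_def \<rho>_def r0 by (simp add: dist_commute)
      finally show "z \<in> V" using r0 by auto
    qed
    define Ks where "Ks = {z \<in> cball y \<rho>. f z = c}"
    have Ksc: "closed Ks" unfolding Ks_def
      by (rule continuous_closed_preimage_constant) (use fc cbV continuous_on_subset in auto)
    have q0K: "q0 \<in> Ks" unfolding Ks_def \<rho>_def using q0 by simp
    obtain q where qK: "q \<in> Ks" and qmin: "\<And>z. z \<in> Ks \<Longrightarrow> dist y q \<le> dist y z"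
      using distance_attains_inf[OF Ksc, of y] q0K by blast
    define R where "R = dist y q"
    have fq: "f q = c" and qc: "dist y q \<le> \<rho>" using qK Ks_def by auto
    have Rp: "R > 0" unfolding R_def using fq fy by (cases "q = y") auto
    have Rr: "R \<le> \<rho>" using R_def qc by simp
    show False
    proof (rule hopfA[OF V cE cF cG cP1 cP2 pos f Lf le Rp])
      show "cball y R \<subseteq> V" using cbV Rr by auto
      show "\<And>z. z \<in> ball y R \<Longrightarrow> f z < c"
      proof -
        fix z assume z: "z \<in> ball y R"
        then have zc: "z \<in> cball y \<rho>" using Rr by simp
        then have zV: "z \<in> V" using cbV by blast
        have "f z \<noteq> c"
        proof
          assume "f z = c"
          then have "z \<in> Ks" using zc Ks_def by simp
          then have "dist y q \<le> dist y z" by (rule qmin)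
          then show False using z R_def by simp
        qed
        then show "f z < c" using le[OF zV] by simp
      qed
      show "dist q y = R" using R_def by (simp add: dist_commute)
      show "f q = c" by (rule fq)
    qed simp_all
  qed
  then show ?thesis using r0 r_def by (intro exI[of _ r]) auto
qed


definition "cE X z = pd1 X z \<bullet> pd1 X z"
definition "cF X z = pd1 X z \<bullet> pd2 X z"
definition "cG X z = pd2 X z \<bullet> pd2 X z"
definition "T1 X z = (cG X z / metric_det X z) *\<^sub>R pd1 X z - (cF X z / metric_det X z) *\<^sub>R pd2 X z"
definition "T2 X z = (cE X z / metric_det X z) *\<^sub>R pd2 X z - (cF X z / metric_det X z) *\<^sub>R pd1 X z"
definition "Kv X z = cG X z *\<^sub>R pd1 (pd1 X) z - (2 * cF X z) *\<^sub>R pd2 (pd1 X) z + cE X z *\<^sub>R pd2 (pd2 X) z"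
definition "cP1 \<phi> X z = tgrad X (\<lambda>r. \<phi> (X r \<bullet> e3)) z \<bullet> T1 X z - (Kv X z \<bullet> T1 X z) / metric_det X z"
definition "cP2 \<phi> X z = tgrad X (\<lambda>r. \<phi> (X r \<bullet> e3)) z \<bullet> T2 X z - (Kv X z \<bullet> T2 X z) / metric_det X z"

lemma tgrad_T: "tgrad X g z = pd1 g z *\<^sub>R T1 X z + pd2 g z *\<^sub>R T2 X z"
  unfolding T1_def T2_def cE_def cF_def cG_def by (rule tgrad_eq) auto

lemma alg3: fixes G F E D a11 a12 a22 g1 g2 x1 x2 y1 y2 z1 z2 t1 t2 :: real
  assumes "D \<noteq> 0"
  shows "(G * (a11 - (g1 * x1 + g2 * x2)) - 2 * F * (a12 - (g1 * y1 + g2 * y2)) + E * (a22 - (g1 * z1 + g2 * z2))) / D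
       + (g1 * t1 + g2 * t2)
     = (G * a11 - 2 * F * a12 + E * a22) / D + (t1 - (G * x1 - 2 * F * y1 + E * z1) / D) * g1
       + (t2 - (G * x2 - 2 * F * y2 + E * z2) / D) * g2"
  using assms by (simp add: field_simps)

lemma Lop_Lab:
  assumes D: "metric_det X z \<noteq> 0"
  shows "Lop \<phi> X g z = Lab (cE X) (cF X) (cG X) (cP1 \<phi> X) (cP2 \<phi> X) g z"
proof -
  define T where "T = tgrad X g z"
  have TT: "T = pd1 g z *\<^sub>R T1 X z + pd2 g z *\<^sub>R T2 X z" unfolding T_def by (rule tgrad_T)
  have md: "metric_det X z = cE X z * cG X z - (cF X z)^2" unfolding metric_det_def cE_def cF_def cG_def ..
  have i1: "v \<bullet> T = pd1 g z * (v \<bullet> T1 X z) + pd2 g z * (v \<bullet> T2 X z)" for v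
    unfolding TT by (simp add: inner_add_right)
  have k1: "Kv X z \<bullet> T1 X z = cG X z * (pd1 (pd1 X) z \<bullet> T1 X z) - 2 * cF X z * (pd2 (pd1 X) z \<bullet> T1 X z) + cE X z * (pd2 (pd2 X) z \<bullet> T1 X z)"
    unfolding Kv_def by (simp add: inner_add_left inner_diff_left)
  have k2: "Kv X z \<bullet> T2 X z = cG X z * (pd1 (pd1 X) z \<bullet> T2 X z) - 2 * cF X z * (pd2 (pd1 X) z \<bullet> T2 X z) + cE X z * (pd2 (pd2 X) z \<bullet> T2 X z)"
    unfolding Kv_def by (simp add: inner_add_left inner_diff_left)
  have "Lop \<phi> X g z = (cG X z * (pd1 (pd1 g) z - pd1 (pd1 X) z \<bullet> T) - 2 * cF X z * (pd2 (pd1 g) z - pd2 (pd1 X) z \<bullet> T)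
         + cE X z * (pd2 (pd2 g) z - pd2 (pd2 X) z \<bullet> T)) / metric_det X z + tgrad X (\<lambda>r. \<phi> (X r \<bullet> e3)) z \<bullet> T"
    unfolding Lop_def lap_local_def Let_def T_def cE_def cF_def cG_def metric_det_def ..
  also have "\<dots> = Lab (cE X) (cF X) (cG X) (cP1 \<phi> X) (cP2 \<phi> X) g z"
    unfolding i1 Lab_def cP1_def cP2_def k1 k2 md[symmetric]
    by (rule alg3[OF D])
  finally show ?thesis .
qed

lemma pd_Phi:
  assumes X: "Ck_on (Suc k) V X" and z: "z \<in> V" and dphi: "\<And>x. \<phi> differentiable (at x)"
  shows "pd1 (\<lambda>r. \<phi> (X r \<bullet> e3)) z = deriv \<phi> (X z \<bullet> e3) * (pd1 X z \<bullet> e3)"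
    "pd2 (\<lambda>r. \<phi> (X r \<bullet> e3)) z = deriv \<phi> (X z \<bullet> e3) * (pd2 X z \<bullet> e3)"
proof -
  have d: "(\<phi> has_real_derivative deriv \<phi> (X z \<bullet> e3)) (at (X z \<bullet> e3))"
    using dphi DERIV_deriv_iff_real_differentiable by blast
  show "pd1 (\<lambda>r. \<phi> (X r \<bullet> e3)) z = deriv \<phi> (X z \<bullet> e3) * (pd1 X z \<bullet> e3)"
    using H1_comp[OF d H1_inner[OF Ck_H1[OF X z]]] H1_pd1 by blast
  show "pd2 (\<lambda>r. \<phi> (X r \<bullet> e3)) z = deriv \<phi> (X z \<bullet> e3) * (pd2 X z \<bullet> e3)"
    using H2_comp[OF d H2_inner[OF Ck_H2[OF X z]]] H2_pd2 by blast
qed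

lemma coeff_cont:
  assumes V: "open V" and X: "Ck_on 2 V X" and D: "\<And>z. z \<in> V \<Longrightarrow> metric_det X z \<noteq> 0"
    and dphi: "\<And>x. \<phi> differentiable (at x)" and cd: "continuous_on UNIV (deriv \<phi>)"
  shows "continuous_on V (cE X)" "continuous_on V (cF X)" "continuous_on V (cG X)"
    "continuous_on V (cP1 \<phi> X)" "continuous_on V (cP2 \<phi> X)"
proof -
  have c: "continuous_on V X" "continuous_on V (pd1 X)" "continuous_on V (pd2 X)"
    "continuous_on V (pd1 (pd1 X))" "continuous_on V (pd2 (pd1 X))" "continuous_on V (pd2 (pd2 X))"
    using X by (simp_all add: numeral_2_eq_2)
  show cE: "continuous_on V (cE X)" unfolding cE_def[abs_def] using c by (intro continuous_intros)
  show cF: "continuous_on V (cF X)" unfolding cF_def[abs_def] using c by (intro continuous_intros)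
  show cG: "continuous_on V (cG X)" unfolding cG_def[abs_def] using c by (intro continuous_intros)
  have cD: "continuous_on V (metric_det X)" unfolding metric_det_def[abs_def] using c by (intro continuous_intros)
  have cT1: "continuous_on V (T1 X)" unfolding T1_def[abs_def] using c cE cF cG cD D
    by (intro continuous_intros) auto
  have cT2: "continuous_on V (T2 X)" unfolding T2_def[abs_def] using c cE cF cG cD D
    by (intro continuous_intros) auto
  have cK: "continuous_on V (Kv X)" unfolding Kv_def[abs_def] using c cE cF cG
    by (intro continuous_intros)
  have X1: "Ck_on (Suc 1) V X" using X by (simp add: numeral_2_eq_2)
  have cdX: "continuous_on V (\<lambda>z. deriv \<phi> (X z \<bullet> e3))"
    by (rule continuous_on_compose2[OF cd _ subset_UNIV]) (use c in \<open>intro continuous_intros\<close>)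
  have tP: "tgrad X (\<lambda>r. \<phi> (X r \<bullet> e3)) z = (deriv \<phi> (X z \<bullet> e3) * (pd1 X z \<bullet> e3)) *\<^sub>R T1 X z
      + (deriv \<phi> (X z \<bullet> e3) * (pd2 X z \<bullet> e3)) *\<^sub>R T2 X z" if "z \<in> V" for z
    unfolding tgrad_T pd_Phi[OF X1 that dphi] ..
  have ctP: "continuous_on V (\<lambda>z. tgrad X (\<lambda>r. \<phi> (X r \<bullet> e3)) z)"
  proof (rule continuous_on_cong[THEN iffD2, OF refl])
    show "\<And>z. z \<in> V \<Longrightarrow> tgrad X (\<lambda>r. \<phi> (X r \<bullet> e3)) z = (deriv \<phi> (X z \<bullet> e3) * (pd1 X z \<bullet> e3)) *\<^sub>R T1 X z
      + (deriv \<phi> (X z \<bullet> e3) * (pd2 X z \<bullet> e3)) *\<^sub>R T2 X z" by (rule tP)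
    show "continuous_on V (\<lambda>z. (deriv \<phi> (X z \<bullet> e3) * (pd1 X z \<bullet> e3)) *\<^sub>R T1 X z
      + (deriv \<phi> (X z \<bullet> e3) * (pd2 X z \<bullet> e3)) *\<^sub>R T2 X z)"
      using cdX c cT1 cT2 by (intro continuous_intros)
  qed
  show "continuous_on V (cP1 \<phi> X)" unfolding cP1_def[abs_def] using ctP cT1 cK cD D
    by (intro continuous_intros) auto
  show "continuous_on V (cP2 \<phi> X)" unfolding cP2_def[abs_def] using ctP cT2 cK cD D
    by (intro continuous_intros) auto
qed

lemma coeff_pos:
  assumes "metric_det X z > 0"
  shows "cE X z > 0 \<and> cG X z > 0 \<and> cE X z * cG X z - (cF X z)^2 > 0"
proof -
  have d: "cE X z * cG X z - (cF X z)^2 > 0" using assms unfolding metric_det_def cE_def cF_def cG_def .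
  have "cE X z \<ge> 0" "cG X z \<ge> 0" unfolding cE_def cG_def by simp_all
  moreover have "cE X z * cG X z > 0" using d by (smt (verit) zero_le_power2)
  ultimately show ?thesis using d by (auto simp: zero_less_mult_iff)
qed


lemma chart_cont:
  fixes h :: "'m::t2_space \<Rightarrow> 'b::topological_space"
  assumes at: "surface_atlas A" and hc: "\<And>V x. (V, x) \<in> A \<Longrightarrow> continuous_on V (h \<circ> x)"
  shows "continuous_on UNIV h"
proof -
 have "isCont h p" for p
 proof -
  have cov: "(\<Union>(V, x)\<in>A. x ` V) = UNIV" using at unfolding surface_atlas_def by blast
  then obtain V x where Vx: "(V, x) \<in> A" "p \<in> x ` V" by (metis (no_types, lifting) UNIV_I UN_E case_prod_conv prod.collapse)
  have props: "open V" "open (x ` V)" "continuous_on V x" "inj_on x V" "continuous_on (x ` V) (inv_into V x)"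
    using at Vx(1) unfolding surface_atlas_def by fast+
  have "continuous_on (x ` V) (\<lambda>z. (h \<circ> x) (inv_into V x z))"
  proof (rule continuous_on_compose2[OF hc[OF Vx(1)] props(5)])
    show "inv_into V x ` x ` V \<subseteq> V" by (auto simp: inv_into_into)
  qed
  moreover have "\<And>z. z \<in> x ` V \<Longrightarrow> (h \<circ> x) (inv_into V x z) = h z" by (simp add: f_inv_into_f)
  ultimately have "continuous_on (x ` V) h" using continuous_on_cong by fastforce
  then show "isCont h p" using props(2) Vx(2) continuous_on_eq_continuous_at by blast
 qed
 then show ?thesis by (simp add: continuous_at_imp_continuous_on)
qed

lemma chart_open:
  assumes at: "surface_atlas A" and Vx: "(V, x) \<in> A" and B: "open B" "B \<subseteq> V"
  shows "open (x ` B)"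
proof -
  have props: "open V" "open (x ` V)" "continuous_on V x" "inj_on x V" "continuous_on (x ` V) (inv_into V x)"
    using at Vx unfolding surface_atlas_def by fast+
  have "open (inv_into V x -` B \<inter> x ` V)" using props(5) props(2) B(1) continuous_on_open_vimage by blast
  moreover have "inv_into V x -` B \<inter> x ` V = x ` B"
  proof
    show "inv_into V x -` B \<inter> x ` V \<subseteq> x ` B"
    proof
      fix z assume z: "z \<in> inv_into V x -` B \<inter> x ` V"
      then have "z = x (inv_into V x z)" by (simp add: f_inv_into_f)
      then show "z \<in> x ` B" using z by blast
    qed
    show "x ` B \<subseteq> inv_into V x -` B \<inter> x ` V"
      using B(2) props(4) by (auto simp: inv_into_f_f)
  qed
  ultimately show ?thesis by simp
qed

lemma nondiv_subseq:
  fixes p :: "nat \<Rightarrow> 'm::first_countable_topology"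
  assumes "\<not> divergent_seq p"
  shows "\<exists>l r. strict_mono r \<and> (p \<circ> r) \<longlonglongrightarrow> l"
proof -
  obtain K where K: "compact K" "\<not> (\<forall>\<^sub>F n in sequentially. p n \<notin> K)"
    using assms unfolding divergent_seq_def by blast
  define S where "S = {n. p n \<in> K}"
  have "\<forall>N. \<exists>n\<ge>N. n \<in> S" using K(2) unfolding eventually_sequentially S_def by blast
  then have inf: "infinite S" using infinite_nat_iff_unbounded_le by blast
  define r1 where "r1 = enumerate S"
  have r1: "strict_mono r1" "\<And>n. p (r1 n) \<in> K"
    using strict_mono_enumerate[OF inf] enumerate_in_set[OF inf] unfolding r1_def S_def by auto
  obtain l r2 where "l \<in> K" "strict_mono r2" "((p \<circ> r1) \<circ> r2) \<longlonglongrightarrow> l"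
    using compact_imp_seq_compact[OF K(1)] r1(2) unfolding seq_compact_def by (metis comp_apply)
  then show ?thesis using r1(1) strict_mono_o by (metis comp_assoc)
qed

lemma conn_clopen:
  fixes M :: "'m::topological_space set"
  assumes "connected (UNIV :: 'm set)" "open M" "closed M" "M \<noteq> {}"
  shows "M = UNIV"
proof -
  have "open (- M)" using assms(3) by (simp add: open_Compl)
  then have "M \<inter> UNIV = {} \<or> (- M) \<inter> UNIV = {}"
    using connectedD[OF assms(1) assms(2)] by blast
  then show ?thesis using assms(4) by auto
qed

lemma bessel_e3:
  fixes N v :: "real^3"
  assumes N: "N \<bullet> N = 1" and v: "v \<bullet> e3 = 0" "v \<noteq> 0"
  shows "(N \<bullet> e3)^2 * (v \<bullet> v) \<le> v \<bullet> v - (N \<bullet> v)^2"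
proof -
  have e: "e3 \<bullet> e3 = 1" unfolding e3_def by (simp add: inner_axis_axis)
  define r where "r = N - (N \<bullet> e3) *\<^sub>R e3 - ((N \<bullet> v) / (v \<bullet> v)) *\<^sub>R v"
  have vv: "v \<bullet> v > 0" using v(2) by simp
  have "0 \<le> r \<bullet> r" by simp
  also have "r \<bullet> r = 1 - (N \<bullet> e3)^2 - (N \<bullet> v)^2 / (v \<bullet> v)"
  proof -
    define a where "a = N \<bullet> e3"
    define b where "b = (N \<bullet> v) / (v \<bullet> v)"
    have ex: "(N - A - B) \<bullet> (N - A - B) = N \<bullet> N - 2 * (N \<bullet> A) - 2 * (N \<bullet> B) + A \<bullet> A + 2 * (A \<bullet> B) + B \<bullet> B"
      for A B :: "real^3" by (simp add: inner_diff_left inner_diff_right inner_commute algebra_simps)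
    have "r \<bullet> r = 1 - 2 * (a * a) - 2 * (b * (N \<bullet> v)) + a * a * (e3 \<bullet> e3) + 2 * (a * b * (e3 \<bullet> v)) + b * b * (v \<bullet> v)"
      unfolding r_def a_def[symmetric] b_def[symmetric] ex using N by (simp add: a_def algebra_simps)
    also have "\<dots> = 1 - a * a - 2 * (b * (N \<bullet> v)) + b * b * (v \<bullet> v)" using e v(1) by (simp add: inner_commute)
    also have "b * (N \<bullet> v) = (N \<bullet> v)^2 / (v \<bullet> v)" unfolding b_def by (simp add: power2_eq_square)
    also have "b * b * (v \<bullet> v) = (N \<bullet> v)^2 / (v \<bullet> v)" unfolding b_def using vv by (simp add: power2_eq_square)
    finally show ?thesis unfolding a_def by (simp add: power2_eq_square)
  qed
  finally have "0 \<le> 1 - (N \<bullet> e3)^2 - (N \<bullet> v)^2 / (v \<bullet> v)" .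
  then have "0 \<le> (v \<bullet> v) * (1 - (N \<bullet> e3)^2 - (N \<bullet> v)^2 / (v \<bullet> v))" using vv by simp
  also have "\<dots> = v \<bullet> v - (N \<bullet> e3)^2 * (v \<bullet> v) - (N \<bullet> v)^2" using vv by (simp add: field_simps)
  finally show ?thesis by simp
qed

lemma pd_const_on:
  assumes V: "open V" and q: "q \<in> V" and c: "\<And>z. z \<in> V \<Longrightarrow> f z = c"
  shows "pd1 f q = 0" "pd2 f q = 0"
  using pd1_cong[OF V q c] pd2_cong[OF V q c] H1_pd1[OF H1_const] H2_pd2[OF H2_const] by simp_all


lemma sup_seq_tendsto:
  fixes a :: "nat \<Rightarrow> real"
  assumes "\<And>n. S - 1 / real (Suc n) < a n" "\<And>n. a n \<le> S"
  shows "a \<longlonglongrightarrow> S"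
proof (rule tendsto_sandwich[of "\<lambda>n. S - 1 / real (Suc n)" _ _ "\<lambda>n. S"])
  show "\<forall>\<^sub>F n in sequentially. S - 1 / real (Suc n) \<le> a n"
    by (intro always_eventually allI less_imp_le assms(1))
  show "\<forall>\<^sub>F n in sequentially. a n \<le> S" using assms(2) by simp
  have "(\<lambda>n. 1 / real (Suc n)) \<longlonglongrightarrow> 0" using LIMSEQ_Suc[OF lim_const_over_n[of 1]] by simp
  then show "(\<lambda>n. S - 1 / real (Suc n)) \<longlonglongrightarrow> S" using tendsto_diff[OF tendsto_const, of _ 0 sequentially S] by simp
qed simp

lemma limit_max:
  fixes h :: "'m::t2_space \<Rightarrow> real"
  assumes hc: "continuous_on UNIV h" and bd: "bdd_above (range h)"
    and p: "\<And>n. Sup (range h) - 1 / real (Suc n) < h (p n)"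
    and r: "strict_mono r" and l: "(p \<circ> r) \<longlonglongrightarrow> l"
  shows "\<forall>y. h y \<le> h l"
proof -
  have le: "h y \<le> Sup (range h)" for y using bd by (simp add: cSup_upper)
  have "(\<lambda>n. h (p n)) \<longlonglongrightarrow> Sup (range h)" by (rule sup_seq_tendsto[OF p le])
  then have a: "(\<lambda>n. h (p (r n))) \<longlonglongrightarrow> Sup (range h)" using LIMSEQ_subseq_LIMSEQ[OF _ r] by (simp add: o_def)
  have "isCont h l" using hc continuous_on_eq_continuous_at by blast
  then have b: "(\<lambda>n. h (p (r n))) \<longlonglongrightarrow> h l" using isCont_tendsto_compose l by (simp add: o_def)
  have "h l = Sup (range h)" using LIMSEQ_unique[OF b a] .
  then show ?thesis using le by simp
qed

lemma nomax_divergent: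
  fixes h :: "'m::{t2_space, first_countable_topology} \<Rightarrow> real"
  assumes hc: "continuous_on UNIV h" and bd: "bdd_above (range h)"
    and p: "\<And>n. Sup (range h) - 1 / real (Suc n) < h (p n)"
    and nm: "\<not> (\<exists>l. \<forall>y. h y \<le> h l)"
  shows "divergent_seq p"
proof (rule ccontr)
  assume "\<not> divergent_seq p"
  then obtain l r where "strict_mono r" "(p \<circ> r) \<longlonglongrightarrow> l" using nondiv_subseq by blast
  then have "\<forall>y. h y \<le> h l" using limit_max[OF hc bd p] by blast
  then show False using nm by blast
qed

lemma exists_sup_seq:
  fixes h :: "'m \<Rightarrow> real"
  assumes bd: "bdd_above (range h)"
  shows "\<exists>p. \<forall>n. Sup (range h) - 1 / real (Suc n) < h (p n)"
proof -
  have "\<forall>n. \<exists>y. Sup (range h) - 1 / real (Suc n) < h y"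
  proof
    fix n
    have "Sup (range h) - 1 / real (Suc n) < Sup (range h)" by simp
    then show "\<exists>y. Sup (range h) - 1 / real (Suc n) < h y" using less_cSupE[of _ "range h"] by blast
  qed
  then show ?thesis by (rule choice)
qed

lemma tgrad_zero: "pd1 g q = 0 \<Longrightarrow> pd2 g q = 0 \<Longrightarrow> tgrad X g q = 0"
  unfolding tgrad_T by simp


lemma chart_info:
  assumes at: "surface_atlas A" and im: "immersion A F" and un: "unit_normal A F N"
    and mi: "phi_e3_minimal A F N \<phi>" and Vx: "(V, x) \<in> A"
  shows "open V" "\<And>k. Ck_on k V (F \<circ> x)"
    "\<And>q. q \<in> V \<Longrightarrow> frame_at (F \<circ> x) (N (x q)) q"
    "\<And>q. q \<in> V \<Longrightarrow> metric_det (F \<circ> x) q > 0"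
    "\<And>q. q \<in> V \<Longrightarrow> mean_curv_vec (F \<circ> x) (N (x q)) q = (deriv \<phi> ((F \<circ> x) q \<bullet> e3) * (N (x q) \<bullet> e3)) *\<^sub>R N (x q)"
proof -
  show "open V" using at Vx unfolding surface_atlas_def by fast
  have sm: "smooth2_on V (F \<circ> x)" and ij: "\<And>q. q \<in> V \<Longrightarrow> inj (\<lambda>(s, t). s *\<^sub>R pd1 (F \<circ> x) q + t *\<^sub>R pd2 (F \<circ> x) q)"
    using im Vx unfolding immersion_def by fast+
  show "\<And>k. Ck_on k V (F \<circ> x)" using sm unfolding smooth2_on_def by blast
  show md: "metric_det (F \<circ> x) q > 0" if "q \<in> V" for q
    unfolding metric_det_def by (rule D_pos[OF ij[OF that]])
  have nn: "N p \<bullet> N p = 1" for p using un unfolding unit_normal_def by (simp add: norm_eq_1)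
  have perp: "\<And>q. q \<in> V \<Longrightarrow> N (x q) \<bullet> pd1 (F \<circ> x) q = 0 \<and> N (x q) \<bullet> pd2 (F \<circ> x) q = 0"
    using un Vx unfolding unit_normal_def by fast
  show "frame_at (F \<circ> x) (N (x q)) q" if "q \<in> V" for q
    unfolding frame_at_def using nn perp[OF that] md[OF that] by simp
  show "mean_curv_vec (F \<circ> x) (N (x q)) q = (deriv \<phi> ((F \<circ> x) q \<bullet> e3) * (N (x q) \<bullet> e3)) *\<^sub>R N (x q)"
    if "q \<in> V" for q using mi Vx that unfolding phi_e3_minimal_def by fastforce
qed


theorem theoremD:
  fixes A :: "((real \<times> real) set \<times> (real \<times> real \<Rightarrow> 'm::{t2_space, second_countable_topology})) set"
    and F :: "'m \<Rightarrow> real^3" and N :: "'m \<Rightarrow> real^3"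
    and \<phi> :: "real \<Rightarrow> real" and v :: "real^3"
  assumes "smooth_real \<phi>"
    and "surface_atlas A"
    and "connected (UNIV :: 'm set)"
    and "immersion A F"
    and "unit_normal A F N"
    and "phi_e3_minimal A F N \<phi>"
    and "phi_stoch_complete A F \<phi>"
    and "v \<noteq> 0" and "v \<bullet> e3 = 0"
    and "\<forall>p. F p \<bullet> v \<le> 0"
  shows "(\<exists>c. range F = {y. y \<bullet> v = c})
    \<or> (\<not> (\<exists>c. range F = {y. y \<bullet> v = c})
        \<and> (\<exists>p :: nat \<Rightarrow> 'm. divergent_seq p \<and> (\<lambda>n. N (p n) \<bullet> e3) \<longlonglongrightarrow> 0))"
proof -
  note sm = assms(1) and at = assms(2) and conn = assms(3) and im = assms(4) and un = assms(5)
    and mi = assms(6) and sc = assms(7) and v0 = assms(8) and ve = assms(9) and hs = assms(10)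
  note ci = chart_info[OF at im un mi]
  have dphi: "\<And>y. \<phi> differentiable (at y)" proof -
    have "\<forall>y. ((deriv ^^ 0) \<phi>) differentiable (at y)" using sm unfolding smooth_real_def by blast
    then show "\<And>y. \<phi> differentiable (at y)" by simp
  qed
  have dcont: "continuous_on UNIV (deriv \<phi>)"
  proof -
    have "\<forall>y. ((deriv ^^ (Suc 0)) \<phi>) differentiable (at y)" using sm unfolding smooth_real_def by blast
    then have "\<And>y. deriv \<phi> differentiable (at y)" by simp
    then show ?thesis by (simp add: differentiable_imp_continuous_within continuous_at_imp_continuous_on)
  qed
  have nn: "N p \<bullet> N p = 1" for p using un unfolding unit_normal_def by (simp add: norm_eq_1)
  have cover: "\<exists>V x q. (V, x) \<in> A \<and> q \<in> V \<and> x q = p" for p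
  proof -
    have "(\<Union>(V, x)\<in>A. x ` V) = UNIV" using at unfolding surface_atlas_def by blast
    then obtain V x where "(V, x) \<in> A" "p \<in> x ` V" by (metis (no_types, lifting) UNIV_I UN_E case_prod_conv prod.collapse)
    then show ?thesis by blast
  qed
  have Fcont: "continuous_on UNIV F"
  proof (rule chart_cont[OF at])
    fix V x assume "(V, x) \<in> A"
    then show "continuous_on V (F \<circ> x)" using ci(2)[of V x 0] by simp
  qed
  
  have Lin: "Lop \<phi> (F \<circ> x) (\<lambda>z. (F \<circ> x) z \<bullet> a) q = 0" if "(V, x) \<in> A" "q \<in> V" "a \<bullet> e3 = 0" for V x q a
  proof -
    have X2: "Ck_on 2 V (F \<circ> x)" using ci(2)[OF that(1)] .
    have "Lop \<phi> (F \<circ> x) (\<lambda>z. (F \<circ> x) z \<bullet> a) q = deriv \<phi> ((F \<circ> x) q \<bullet> e3) * (e3 \<bullet> a)"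
      by (rule Lop_lin[OF ci(1)[OF that(1)] X2 that(2) ci(3)[OF that(1,2)] dphi ci(5)[OF that(1,2)]])
    then show ?thesis using that(3) by (simp add: inner_commute)
  qed
  have tgr: "tgrad (F \<circ> x) (\<lambda>z. (F \<circ> x) z \<bullet> a) q = a - (a \<bullet> N (x q)) *\<^sub>R N (x q)" if "(V, x) \<in> A" "q \<in> V" for V x q a
  proof -
    have X1: "Ck_on (Suc 0) V (F \<circ> x)" using ci(2)[OF that(1)] .
    show ?thesis by (rule tgrad_lin[OF ci(3)[OF that] Ck_H1[OF X1 that(2)] Ck_H2[OF X1 that(2)]])
  qed
  define u where "u p = F p \<bullet> v" for p
  have ucont: "continuous_on UNIV u" unfolding u_def[abs_def] using Fcont by (intro continuous_intros)
  have Q: "\<exists>p :: nat \<Rightarrow> 'm. divergent_seq p \<and> (\<lambda>n. N (p n) \<bullet> e3) \<longlonglongrightarrow> 0"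
  proof (cases "\<exists>l. \<forall>y. u y \<le> u l")
    case True
    then obtain l0 where l0: "\<And>y. u y \<le> u l0" by blast
    define c where "c = u l0"
    define M where "M = {p. u p = c}"
    have Mcl: "closed M" unfolding M_def using continuous_closed_preimage_constant[OF ucont closed_UNIV, of c] by simp
    have Mop: "open M"
    proof (subst open_subopen, intro ballI)
      fix p assume pM: "p \<in> M"
      obtain V x q where Vx: "(V, x) \<in> A" and q: "q \<in> V" and xq: "x q = p" using cover[of p] by blast
      have V: "open V" using ci(1)[OF Vx] .
      have X2: "Ck_on 2 V (F \<circ> x)" using ci(2)[OF Vx] .
      have Dn: "metric_det (F \<circ> x) z \<noteq> 0" if "z \<in> V" for z
        using ci(4)[OF Vx that] by simp
      note cc = coeff_cont[OF V X2 Dn dphi dcont]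
      define f where "f z = (F \<circ> x) z \<bullet> v" for z
      have fC: "Ck_on 2 V f" unfolding f_def[abs_def] by (rule Ck_inner[OF V X2])
      have Lf: "Lab (cE (F \<circ> x)) (cF (F \<circ> x)) (cG (F \<circ> x)) (cP1 \<phi> (F \<circ> x)) (cP2 \<phi> (F \<circ> x)) f z \<ge> 0"
        if "z \<in> V" for z
        using Lop_Lab[OF Dn[OF that], of \<phi> f] Lin[OF Vx that ve] unfolding f_def[abs_def] by simp
      have fle: "f z \<le> c" if "z \<in> V" for z unfolding f_def c_def using l0[of "x z"] u_def by simp
      have fq: "f q = c" unfolding f_def using pM xq M_def u_def by simp
      obtain r where r: "r > 0" "\<forall>z\<in>ball q r. f z = c"
        using local_smp[OF V cc(1) cc(2) cc(3) cc(4) cc(5) coeff_pos[OF ci(4)[OF Vx]] fC Lf fle q fq] by blast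
      define T where "T = x ` (ball q r \<inter> V)"
      have "open T" unfolding T_def by (rule chart_open[OF at Vx]) (use V in auto)
      moreover have "p \<in> T" unfolding T_def using q r(1) xq by auto
      moreover have "T \<subseteq> M" unfolding T_def M_def using r(2) f_def u_def by auto
      ultimately show "\<exists>T. open T \<and> p \<in> T \<and> T \<subseteq> M" by blast
    qed
    have "l0 \<in> M" unfolding M_def c_def by simp
    then have "M \<noteq> {}" by blast
    then have MU: "M = UNIV" by (rule conn_clopen[OF conn Mop Mcl])
    have uc: "u p = c" for p
    proof -
      have "p \<in> M" using MU by simp
      then show ?thesis unfolding M_def by simp
    qed
    have nv: "v = (v \<bullet> N p) *\<^sub>R N p" for p
    proof -
      obtain V x q where Vx: "(V, x) \<in> A" and q: "q \<in> V" and xq: "x q = p" using cover[of p] by blast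
      have cst: "\<And>z. z \<in> V \<Longrightarrow> (F \<circ> x) z \<bullet> v = c" using uc u_def by simp
      note pc = pd_const_on[OF ci(1)[OF Vx] q, of "\<lambda>z. (F \<circ> x) z \<bullet> v" c, OF cst]
      have "pd1 (\<lambda>z. (F \<circ> x) z \<bullet> v) q = 0" "pd2 (\<lambda>z. (F \<circ> x) z \<bullet> v) q = 0" using pc by simp_all
      then have z: "tgrad (F \<circ> x) (\<lambda>z. (F \<circ> x) z \<bullet> v) q = 0" by (rule tgrad_zero)
      have "v - (v \<bullet> N (x q)) *\<^sub>R N (x q) = 0" by (rule trans[OF tgr[OF Vx q, of v, symmetric] z])
      then have "v = (v \<bullet> N (x q)) *\<^sub>R N (x q)" by (subst eq_iff_diff_eq_0)
      then show ?thesis unfolding xq .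
    qed
    have vn: "v \<bullet> N p \<noteq> 0" for p
    proof
      assume h: "v \<bullet> N p = 0"
      have "v = (v \<bullet> N p) *\<^sub>R N p" by (rule nv)
      also have "\<dots> = 0" using h by simp
      finally have "v = 0" .
      then show False using v0 by simp
    qed
    have eta0: "N p \<bullet> e3 = 0" for p
    proof -
      have "v \<bullet> e3 = ((v \<bullet> N p) *\<^sub>R N p) \<bullet> e3" using arg_cong[OF nv[of p], of "\<lambda>t. t \<bullet> e3"] .
      then have "v \<bullet> e3 = (v \<bullet> N p) * (N p \<bullet> e3)" by simp
      then show ?thesis using ve vn[of p] by simp
    qed
    define a where "a = cross3 e3 v"
    have ae: "a \<bullet> e3 = 0" unfolding a_def using dot_cross_self(1)[of e3 v] by (simp add: inner_commute)
    have av: "a \<bullet> v = 0" unfolding a_def using dot_cross_self(3)[of e3 v] by simp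
    have a0: "a \<noteq> 0"
    proof
      assume az: "a = 0"
      have e: "norm e3 = 1" unfolding e3_def by simp
      have "(norm (cross3 e3 v))^2 = (norm e3)^2 * (norm v)^2 - (e3 \<bullet> v)^2" by (rule norm_cross)
      also have "\<dots> = (norm v)^2" using e ve by (simp add: inner_commute)
      finally have "(norm v)^2 = 0" using az unfolding a_def by simp
      then show False using v0 by simp
    qed
    define g where "g p = arctan (F p \<bullet> a)" for p
    have gcont: "continuous_on UNIV g" unfolding g_def[abs_def] using Fcont by (intro continuous_intros)
    have "g y \<le> pi / 2" for y unfolding g_def using arctan_ubound[of "F y \<bullet> a"] by simp
    then have gbd: "bdd_above (range g)" by (intro bdd_aboveI[of _ "pi / 2"]) auto
    obtain p where P: "\<And>n. Sup (range g) - 1 / real (Suc n) < g (p n)" using exists_sup_seq[OF gbd] by blast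
    have nomax: "\<not> (\<exists>l. \<forall>y. g y \<le> g l)"
    proof
      assume "\<exists>l. \<forall>y. g y \<le> g l"
      then obtain l where gl: "\<And>y. g y \<le> g l" by blast
      obtain V x q where Vx: "(V, x) \<in> A" and q: "q \<in> V" and xq: "x q = l" using cover[of l] by blast
      have V: "open V" using ci(1)[OF Vx] .
      have X1: "Ck_on (Suc 1) V (\<lambda>z. (F \<circ> x) z \<bullet> a)" by (rule Ck_inner[OF V ci(2)[OF Vx]])
      have mx: "(F \<circ> x) z \<bullet> a \<le> (F \<circ> x) q \<bullet> a" if "z \<in> V" for z
        using gl[of "x z"] xq unfolding g_def by (simp add: arctan_le_iff)
      note mfo = max_first_order[OF V X1 q mx]
      have "pd1 (\<lambda>z. (F \<circ> x) z \<bullet> a) q = 0" "pd2 (\<lambda>z. (F \<circ> x) z \<bullet> a) q = 0"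
        using mfo by simp_all
      then have z: "tgrad (F \<circ> x) (\<lambda>z. (F \<circ> x) z \<bullet> a) q = 0" by (rule tgrad_zero)
      have "a - (a \<bullet> N (x q)) *\<^sub>R N (x q) = 0" by (rule trans[OF tgr[OF Vx q, of a, symmetric] z])
      then have "a = (a \<bullet> N (x q)) *\<^sub>R N (x q)" by (subst eq_iff_diff_eq_0)
      then have an: "a = (a \<bullet> N l) *\<^sub>R N l" unfolding xq .
      have "a \<bullet> v = ((a \<bullet> N l) *\<^sub>R N l) \<bullet> ((v \<bullet> N l) *\<^sub>R N l)"
        using an nv[of l] by (rule arg_cong2)
      then have "a \<bullet> v = (a \<bullet> N l) * (v \<bullet> N l)" by (simp add: nn)
      then have h: "a \<bullet> N l = 0" using av vn[of l] by simp
      have "a = (a \<bullet> N l) *\<^sub>R N l" by (rule an)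
      also have "\<dots> = 0" using h by simp
      finally have "a = 0" .
      then show False using a0 by simp
    qed
    have div: "divergent_seq p" by (rule nomax_divergent[OF gcont gbd P nomax])
    have "(\<lambda>n. N (p n) \<bullet> e3) \<longlonglongrightarrow> 0" using eta0 by simp
    then show ?thesis using div by blast
  next
    case False
    define w where "w p = exp (u p)" for p
    have wcont: "continuous_on UNIV w" unfolding w_def[abs_def] using ucont by (intro continuous_intros)
    have w1: "w p \<le> 1" for p unfolding w_def u_def using hs by simp
    have bd: "bdd_above (range w)" using w1 by (intro bdd_aboveI[of _ 1]) auto
    have wx: "w \<circ> x = (\<lambda>z. exp ((\<lambda>z. (F \<circ> x) z \<bullet> v) z))" for x :: "real \<times> real \<Rightarrow> 'm"
      unfolding w_def u_def by (simp add: fun_eq_iff)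
    have fC: "Ck_on k V (\<lambda>z. (F \<circ> x) z \<bullet> v)" if "(V, x) \<in> A" for V x k
      by (rule Ck_inner[OF ci(1)[OF that] ci(2)[OF that]])
    have C2: "C2_surf A w" unfolding C2_surf_def
    proof (clarify)
      fix V x assume Vx: "(V, x) \<in> A"
      show "Ck_on 2 V (w \<circ> x)" unfolding wx by (rule Ck_exp[OF ci(1)[OF Vx] fC[OF Vx]])
    qed
    have "\<exists>p :: nat \<Rightarrow> 'm. \<forall>n. w (p n) > Sup (range w) - 1 / real (Suc n)
            \<and> (\<exists>(V, x)\<in>A. \<exists>q\<in>V. x q = p n \<and> lap_phi_local \<phi> F x w q < 1 / real (Suc n))"
      using sc[unfolded phi_stoch_complete_def, rule_format, of w] C2 bd by simp
    then obtain p :: "nat \<Rightarrow> 'm" where PP: "\<forall>n. w (p n) > Sup (range w) - 1 / real (Suc n)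
            \<and> (\<exists>(V, x)\<in>A. \<exists>q\<in>V. x q = p n \<and> lap_phi_local \<phi> F x w q < 1 / real (Suc n))" by blast
    have P: "\<And>n. w (p n) > Sup (range w) - 1 / real (Suc n)"
      "\<And>n. \<exists>(V, x)\<in>A. \<exists>q\<in>V. x q = p n \<and> lap_phi_local \<phi> F x w q < 1 / real (Suc n)"
      using PP by simp_all
    have lapv: "lap_phi_local \<phi> F x w q = w (x q) * (v \<bullet> v - (v \<bullet> N (x q))^2)" if Vx: "(V, x) \<in> A" and q: "q \<in> V" for V x q
    proof -
      have "lap_phi_local \<phi> F x w q = Lop \<phi> (F \<circ> x) (\<lambda>z. exp ((\<lambda>z. (F \<circ> x) z \<bullet> v) z)) q"
        unfolding lap_phi_Lop wx ..
      also have "\<dots> = exp ((F \<circ> x) q \<bullet> v) * (Lop \<phi> (F \<circ> x) (\<lambda>z. (F \<circ> x) z \<bullet> v) q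
          + tgrad (F \<circ> x) (\<lambda>z. (F \<circ> x) z \<bullet> v) q \<bullet> tgrad (F \<circ> x) (\<lambda>z. (F \<circ> x) z \<bullet> v) q)"
        using ci(4)[OF Vx q] by (intro Lop_exp[OF ci(1)[OF Vx] fC[OF Vx] q]) simp
      also have "\<dots> = w (x q) * (v \<bullet> v - (v \<bullet> N (x q))^2)"
        unfolding Lin[OF Vx q ve] tgr[OF Vx q] w_def u_def using nn[of "x q"]
        by (simp add: inner_diff_left inner_diff_right inner_commute power2_eq_square)
      finally show ?thesis .
    qed
    have bnd: "w (p n) * (v \<bullet> v - (v \<bullet> N (p n))^2) < 1 / real (Suc n)" for n
    proof -
      obtain V x q where Vx: "(V, x) \<in> A" "q \<in> V" "x q = p n" "lap_phi_local \<phi> F x w q < 1 / real (Suc n)"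
        using P(2)[of n] by blast
      show ?thesis using Vx(4) unfolding lapv[OF Vx(1,2)] Vx(3) .
    qed
    have nomax: "\<not> (\<exists>l. \<forall>y. w y \<le> w l)" using False unfolding w_def by simp
    have div: "divergent_seq p" by (rule nomax_divergent[OF wcont bd P(1) nomax])
    define W where "W = Sup (range w)"
    have Wp: "W > 0"
    proof -
      have "w undefined \<le> W" unfolding W_def using bd by (simp add: cSup_upper)
      moreover have "w undefined > 0" unfolding w_def by simp
      ultimately show ?thesis by simp
    qed
    have wt: "(\<lambda>n. w (p n)) \<longlonglongrightarrow> W" unfolding W_def
      by (rule sup_seq_tendsto[OF P(1)]) (use bd in \<open>simp add: cSup_upper\<close>)
    have ev: "\<forall>\<^sub>F n in sequentially. w (p n) > W / 2" using order_tendstoD(1)[OF wt, of "W / 2"] Wp by linarith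
    define K where "K = 2 / (W * (v \<bullet> v))"
    have vv: "v \<bullet> v > 0" using v0 by simp
    have ev2: "\<forall>\<^sub>F n in sequentially. (N (p n) \<bullet> e3)^2 \<le> K / real (Suc n)"
      using ev
    proof eventually_elim
      case (elim n)
      define Z where "Z = v \<bullet> v - (v \<bullet> N (p n))^2"
      define eta where "eta = (N (p n) \<bullet> e3)^2"
      have b1: "eta * (v \<bullet> v) \<le> Z" unfolding eta_def Z_def using bessel_e3[OF nn ve v0] by (simp add: inner_commute)
      have eta0: "eta \<ge> 0" unfolding eta_def by simp
      have "eta * (v \<bullet> v) \<ge> 0" using eta0 vv by simp
      then have Z0: "Z \<ge> 0" using b1 by linarith
      have "(W / 2) * Z \<le> w (p n) * Z" using elim Z0 by (intro mult_right_mono) auto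
      also have "\<dots> < 1 / real (Suc n)" using bnd[of n] unfolding Z_def .
      finally have 1: "(W / 2) * Z < 1 / real (Suc n)" .
      have "(W / 2) * (eta * (v \<bullet> v)) \<le> (W / 2) * Z" using b1 Wp by (intro mult_left_mono) auto
      with 1 have lt: "eta * ((W / 2) * (v \<bullet> v)) < 1 / real (Suc n)" by (simp add: algebra_simps)
      have pos: "(W / 2) * (v \<bullet> v) > 0" using Wp vv by simp
      have "eta < (1 / real (Suc n)) / ((W / 2) * (v \<bullet> v))" by (subst pos_less_divide_eq[OF pos]) (rule lt)
      also have "\<dots> = K / real (Suc n)" unfolding K_def by simp
      finally show ?case unfolding eta_def by simp
    qed
    have "(\<lambda>n. K / real (Suc n)) \<longlonglongrightarrow> 0" using LIMSEQ_Suc[OF lim_const_over_n[of K]] by simp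
    then have sq: "(\<lambda>n. (N (p n) \<bullet> e3)^2) \<longlonglongrightarrow> 0"
      by (rule tendsto_sandwich[rotated 2, OF tendsto_const]) (use ev2 in auto)
    have "(\<lambda>n. sqrt ((N (p n) \<bullet> e3)^2)) \<longlonglongrightarrow> sqrt 0" by (rule tendsto_real_sqrt[OF sq])
    then have "(\<lambda>n. \<bar>N (p n) \<bullet> e3\<bar>) \<longlonglongrightarrow> 0" by simp
    then have "(\<lambda>n. N (p n) \<bullet> e3) \<longlonglongrightarrow> 0" by (simp add: tendsto_rabs_zero_iff)
    then show ?thesis using div by blast
  qed
  then show ?thesis by blast
qed


end
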